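(* Assume the initial state $x_0\in\mathbb{R}^n$ is known and the disturbances satisfy $w_k\in\mathbb{W}:=\{w\in\mathbb{R}^p\mid w^\top Pw\le1\}$ for all $k=0,\dots,T-1$, with $P\in\mathbb{R}^{p\times p}$ symmetric, $P\succ0$; write $\mathbb{W}^T=\mathbb{W}\times\dots\times\mathbb{W}$ ($T$ times). Let $\bar\mu^*_{\mathrm{PWB}}$ be the optimal value of $$\min_{\bar\mu\in\mathbb{R},\,\Phi}\ \bar\mu\quad\text{s.t.}\quad \bm{\delta}^\top(\Phi^\top\mathcal{C}\Phi-\mathcal{O}-\bar\mu\mathcal{W}_w)\bm{\delta}\le0\ \ \forall\mathbf{w}\in\mathbb{W}^T,\qquad \begin{bmatrix}\mathcal{I}-\mathcal{Z}\mathcal{A} & -\mathcal{Z}\mathcal{B}\end{bmatrix}\Phi=\mathcal{E},$$ with $\bm{\delta}=[x_0^\top\ \mathbf{w}^\top]^\top$. Let $\bar\mu^*$ be the optimal value of the semidefinite program $$\min_{\bar\mu,\bar\lambda_1,\dots,\bar\lambda_T,\,\bar\Phi}\ \bar\mu\quad\text{s.t.}\quad \bar\lambda_i\ge0\ (i=1,\dots,T),\quad \begin{bmatrix}\mathcal{I}-\mathcal{Z}\mathcal{A} & -\mathcal{Z}\mathcal{B}\end{bmatrix}\bar\Phi=\mathcal{E},$$ $$\begin{bmatrix} x_0^\top(\mathcal{O}_1+\bar\mu\mathcal{W}_1)x_0-\sum_{i=1}^T\bar\lambda_i & x_0^\top(\mathcal{O}_2^\top+\bar\mu\mathcal{W}_2^\top)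 & x_0^\top\bar\Phi_0^\top\mathcal{C}^{1/2}\\ (\mathcal{O}_2+\bar\mu\mathcal{W}_2)x_0 & \sum_{i=1}^T\bar\lambda_i\mathcal{P}_i+\mathcal{O}_3+\bar\mu\mathcal{W}_3 & \bar\Phi_w^\top\mathcal{C}^{1/2}\\ \mathcal{C}^{1/2}\bar\Phi_0x_0 & \mathcal{C}^{1/2}\bar\Phi_w & \mathcal{I}\end{bmatrix}\succeq0,$$ with corresponding controller $\bar{\mathcal{K}}^*=\bar\Phi_u^*(\bar\Phi_x^* )^{-1}$ for a minimiser $\bar\Phi^*$. Let $\mu^*$ be the optimal value of the semidefinite program $$\min_{\mu,\lambda,\Phi}\ \mu\quad\text{s.t.}\quad\lambda\ge0,\quad \begin{bmatrix}\mathcal{I}-\mathcal{Z}\mathcal{A} & -\mathcal{Z}\mathcal{B}\end{bmatrix}\Phi=\mathcal{E},\quad \begin{bmatrix} x_0^\top(\mathcal{O}_1+\mu\mathcal{W}_1)x_0-\lambda\omega & x_0^\top(\mathcal{O}_2^\top+\mu\mathcal{W}_2^\top) & x_0^\top\Phi_0^\top\mathcal{C}^{1/2}\\ (\mathcal{O}_2+\mu\mathcal{W}_2)x_0 & \lambda\mathcal{I}+\mathcal{O}_3+\mu\mathcal{W}_3 & \Phi_w^\top\mathcal{C}^{1/2}\\ \mathcal{C}^{1/2}\Phi_0x_0 & \mathcal{C}^{1/2}\Phi_w & \mathcal{I}\end{bmatrix}\succeq0$$ with $\omega=T/\sigma_{\min}(P)$. Then $\bar\mu^*$ is a (possibly suboptimal)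 generalised dynamic regret performance level for pointwise bounded disturbances, and $$\bar\mu^*_{\mathrm{PWB}}\le\bar\mu^*\le\mu^*.$$
   Context: Let $n,m,p,T$ be positive integers. Consider the discrete-time linear time-varying system $x_{k+1}=A_kx_k+B_ku_k+E_kw_k$, $k=0,\dots,T-1$, with known $A_k\in\mathbb{R}^{n\times n}$, $B_k\in\mathbb{R}^{n\times m}$, $E_k\in\mathbb{R}^{n\times p}$, each $E_k$ of full row rank. Write $\mathbf{x}=[x_0^\top\cdots x_T^\top]^\top\in\mathbb{R}^{n(T+1)}$, $\mathbf{u}=[u_0^\top\cdots u_T^\top]^\top\in\mathbb{R}^{m(T+1)}$, $\mathbf{w}=[w_0^\top\cdots w_{T-1}^\top]^\top\in\mathbb{R}^{pT}$, $\bm{\delta}=[x_0^\top\ \mathbf{w}^\top]^\top\in\mathbb{R}^{n+pT}$. Cost matrices: symmetric $Q_k\succeq0$ ($n\times n$), $R_k\succ0$ ($m\times m$), $k=0,\dots,T$; $\mathcal{Q}=\mathrm{blkdiag}(Q_0,\dots,Q_T)$, $\mathcal{R}=\mathrm{blkdiag}(R_0,\dots,R_T)$, $\mathcal{C}=\mathrm{blkdiag}(\mathcal{Q},\mathcal{R})$, and $\mathcal{C}^{1/2}$ its symmetric positive semidefinite square root. Let $F\in\mathbb{R}^{n(T+1)\times m(T+1)}$, $G\in\mathbb{R}^{n(T+1)\times(n+pT)}$ be the matrices such that every trajectory satisfies $\mathbf{x}=F\mathbf{u}+G\bm{\delta}$. Define $\mathcal{O}=G^\top\mathcal{Q}(\mathcal{I}+F\mathcal{R}^{-1}F^\top\mathcal{Q})^{-1}G$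 (the optimal non-causal cost is $\bm{\delta}^\top\mathcal{O}\bm{\delta}$), partitioned as $\mathcal{O}=\begin{bmatrix}\mathcal{O}_1&\mathcal{O}_2^\top\\ \mathcal{O}_2&\mathcal{O}_3\end{bmatrix}$ with $\mathcal{O}_1\in\mathbb{R}^{n\times n}$, $\mathcal{O}_3\in\mathbb{R}^{pT\times pT}$. A symmetric disturbance weight $\mathcal{W}_w\succ0$ of size $n+pT$ is given, partitioned as $\mathcal{W}_w=\begin{bmatrix}\mathcal{W}_1&\mathcal{W}_2^\top\\ \mathcal{W}_2&\mathcal{W}_3\end{bmatrix}$ conformally. Let $\mathcal{A}=\mathrm{blkdiag}(A_0,\dots,A_T)$, $\mathcal{B}=\mathrm{blkdiag}(B_0,\dots,B_T)$ (with $A_T,B_T$ arbitrary; they do not affect the constraint), $\mathcal{E}=\mathrm{blkdiag}(\mathcal{I}_n,E_0,\dots,E_{T-1})$, and $\mathcal{Z}$ the block downshift operator on $\mathbb{R}^{n(T+1)}$ with blocks of size $n$. A system response $\Phi\in\mathbb{R}^{(n+m)(T+1)\times(n+pT)}$ is split by rows as $\Phi=\begin{bmatrix}\Phi_x\\ \Phi_u\end{bmatrix}$ ($\Phi_x$ the first $n(T+1)$ rows) and by columns as $\Phi=[\Phi_0\ \Phi_w]$ ($\Phi_0$ the first $n$ columns); it represents $[\mathbf{x}^\top\ \mathbf{u}^\top]^\top=\Phi\bm{\delta}$ under the feedback $\mathbf{u}=\Phi_u\Phi_x^{-1}\mathbf{x}$. For $i=1,\dots,T$, $\mathcal{P}_i\in\mathbb{R}^{pT\times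 pT}$ is the block-diagonal matrix with $P$ as its $i$-th diagonal $p\times p$ block and zeros elsewhere. $\sigma_{\min}(P)$ is the smallest singular value of $P$. *)

theory Defs
  imports "Jordan_Normal_Form.Char_Poly" "Jordan_Normal_Form.DL_Rank" "HOL-Library.Extended_Real"
begin

definition subm :: "real mat \<Rightarrow> nat \<Rightarrow> nat \<Rightarrow> nat \<Rightarrow> nat \<Rightarrow> real mat" where
  "subm M r0 c0 r c = mat r c (\<lambda>(i,j). M $$ (r0 + i, c0 + j))"

definition bdiag :: "nat \<Rightarrow> nat \<Rightarrow> nat \<Rightarrow> (nat \<Rightarrow> real mat) \<Rightarrow> real mat" where
  "bdiag N r c f = mat (N * r) (N * c)
     (\<lambda>(i,j). if i div r = j div c then f (i div r) $$ (i mod r, j mod c) else 0)"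

definition hcat :: "real mat \<Rightarrow> real mat \<Rightarrow> real mat" where
  "hcat M N = four_block_mat M N (0\<^sub>m 0 (dim_col M)) (0\<^sub>m 0 (dim_col N))"

definition blk3 :: "real mat \<Rightarrow> real mat \<Rightarrow> real mat \<Rightarrow> real mat \<Rightarrow> real mat \<Rightarrow> real mat
   \<Rightarrow> real mat \<Rightarrow> real mat \<Rightarrow> real mat \<Rightarrow> real mat" where
  "blk3 a b c d e f g h i = four_block_mat (four_block_mat a b d e) (c @\<^sub>r f) (hcat g h) i"

definition colm :: "real vec \<Rightarrow> real mat" where
  "colm v = mat_of_cols (dim_vec v) [v]"

definition scm :: "real \<Rightarrow> real mat" where
  "scm s = mat 1 1 (\<lambda>_. s)"

fun msum :: "nat \<Rightarrow> (nat \<Rightarrow> real mat) \<Rightarrow> nat \<Rightarrow> real mat" where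
  "msum d f 0 = 0\<^sub>m d d"
| "msum d f (Suc k) = msum d f k + f (Suc k)"

definition quad :: "real mat \<Rightarrow> real vec \<Rightarrow> real" where
  "quad M v = v \<bullet> (M *\<^sub>v v)"

definition psd :: "real mat \<Rightarrow> bool" where
  "psd M \<longleftrightarrow> M \<in> carrier_mat (dim_row M) (dim_row M) \<and> transpose_mat M = M \<and>
     (\<forall>v \<in> carrier_vec (dim_row M). quad M v \<ge> 0)"

definition pd :: "real mat \<Rightarrow> bool" where
  "pd M \<longleftrightarrow> M \<in> carrier_mat (dim_row M) (dim_row M) \<and> transpose_mat M = M \<and>
     (\<forall>v \<in> carrier_vec (dim_row M). v \<noteq> 0\<^sub>v (dim_row M) \<longrightarrow> quad M v > 0)"

definition minv :: "real mat \<Rightarrow> real mat" where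
  "minv M = (THE N. N \<in> carrier_mat (dim_row M) (dim_row M) \<and>
                    M * N = 1\<^sub>m (dim_row M) \<and> N * M = 1\<^sub>m (dim_row M))"

definition sigma_min :: "real mat \<Rightarrow> real" where
  "sigma_min P = sqrt (Min {ev. eigenvalue (transpose_mat P * P) ev})"

text \<open>Trajectories of x_{k+1} = A_k x_k + B_k u_k + E_k w_k, stacked;
  dl = [x_0; w] with w = [w_0; ...; w_{T-1}].\<close>
definition is_traj :: "nat \<Rightarrow> nat \<Rightarrow> nat \<Rightarrow> nat \<Rightarrow> (nat \<Rightarrow> real mat) \<Rightarrow> (nat \<Rightarrow> real mat)
   \<Rightarrow> (nat \<Rightarrow> real mat) \<Rightarrow> real vec \<Rightarrow> real vec \<Rightarrow> real vec \<Rightarrow> bool" where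
  "is_traj n m p T A B E x u dl \<longleftrightarrow>
     x \<in> carrier_vec (n * (T+1)) \<and> u \<in> carrier_vec (m * (T+1)) \<and> dl \<in> carrier_vec (n + p * T) \<and>
     vec n (\<lambda>i. x $ i) = vec n (\<lambda>i. dl $ i) \<and>
     (\<forall>k<T. vec n (\<lambda>i. x $ ((k+1) * n + i)) =
        A k *\<^sub>v vec n (\<lambda>i. x $ (k * n + i)) + B k *\<^sub>v vec m (\<lambda>i. u $ (k * m + i))
        + E k *\<^sub>v vec p (\<lambda>i. dl $ (n + k * p + i)))"

definition Acal :: "nat \<Rightarrow> nat \<Rightarrow> (nat \<Rightarrow> real mat) \<Rightarrow> real mat" where
  "Acal n T A = bdiag (T+1) n n A"

definition Bcal :: "nat \<Rightarrow> nat \<Rightarrow> nat \<Rightarrow> (nat \<Rightarrow> real mat) \<Rightarrow> real mat" where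
  "Bcal n m T B = bdiag (T+1) n m B"

definition Ecal :: "nat \<Rightarrow> nat \<Rightarrow> nat \<Rightarrow> (nat \<Rightarrow> real mat) \<Rightarrow> real mat" where
  "Ecal n p T E = four_block_mat (1\<^sub>m n) (0\<^sub>m n (p * T)) (0\<^sub>m (n * T) n) (bdiag T n p E)"

text \<open>Block downshift operator on R^{n(T+1)}.\<close>
definition Zcal :: "nat \<Rightarrow> nat \<Rightarrow> real mat" where
  "Zcal n T = mat (n * (T+1)) (n * (T+1)) (\<lambda>(i,j). if i = j + n then 1 else 0)"

definition Qcal :: "nat \<Rightarrow> nat \<Rightarrow> (nat \<Rightarrow> real mat) \<Rightarrow> real mat" where
  "Qcal n T Q = bdiag (T+1) n n Q"

definition Rcal :: "nat \<Rightarrow> nat \<Rightarrow> (nat \<Rightarrow> real mat) \<Rightarrow> real mat" where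
  "Rcal m T R = bdiag (T+1) m m R"

definition Ccal :: "nat \<Rightarrow> nat \<Rightarrow> nat \<Rightarrow> (nat \<Rightarrow> real mat) \<Rightarrow> (nat \<Rightarrow> real mat) \<Rightarrow> real mat" where
  "Ccal n m T Q R = four_block_mat (Qcal n T Q) (0\<^sub>m (n * (T+1)) (m * (T+1)))
                                   (0\<^sub>m (m * (T+1)) (n * (T+1))) (Rcal m T R)"

definition Ocal :: "nat \<Rightarrow> nat \<Rightarrow> nat \<Rightarrow> (nat \<Rightarrow> real mat) \<Rightarrow> (nat \<Rightarrow> real mat) \<Rightarrow> real mat \<Rightarrow> real mat \<Rightarrow> real mat" where
  "Ocal n m T Q R F G = transpose_mat G * Qcal n T Q *
     minv (1\<^sub>m (n * (T+1)) + F * minv (Rcal m T R) * transpose_mat F * Qcal n T Q) * G"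

definition achievable :: "nat \<Rightarrow> nat \<Rightarrow> nat \<Rightarrow> nat \<Rightarrow> (nat \<Rightarrow> real mat) \<Rightarrow> (nat \<Rightarrow> real mat)
   \<Rightarrow> (nat \<Rightarrow> real mat) \<Rightarrow> real mat \<Rightarrow> bool" where
  "achievable n m p T A B E Phi \<longleftrightarrow>
     Phi \<in> carrier_mat ((n + m) * (T+1)) (n + p * T) \<and>
     hcat (1\<^sub>m (n * (T+1)) - Zcal n T * Acal n T A) (- (Zcal n T * Bcal n m T B)) * Phi = Ecal n p T E"

definition Phi0 :: "nat \<Rightarrow> real mat \<Rightarrow> real mat" where
  "Phi0 n Phi = subm Phi 0 0 (dim_row Phi) n"

definition Phiw :: "nat \<Rightarrow> real mat \<Rightarrow> real mat" where
  "Phiw n Phi = subm Phi 0 n (dim_row Phi) (dim_col Phi - n)"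

definition Phix :: "nat \<Rightarrow> nat \<Rightarrow> real mat \<Rightarrow> real mat" where
  "Phix n T Phi = subm Phi 0 0 (n * (T+1)) (dim_col Phi)"

definition Phiu :: "nat \<Rightarrow> nat \<Rightarrow> real mat \<Rightarrow> real mat" where
  "Phiu n T Phi = subm Phi (n * (T+1)) 0 (dim_row Phi - n * (T+1)) (dim_col Phi)"

text \<open>The matrix P_i: pT x pT block diagonal with P as i-th diagonal block (i = 1..T).\<close>
definition Pcal :: "nat \<Rightarrow> nat \<Rightarrow> real mat \<Rightarrow> nat \<Rightarrow> real mat" where
  "Pcal p T P i = bdiag T p p (\<lambda>k. if k + 1 = i then P else 0\<^sub>m p p)"

definition in_WT :: "nat \<Rightarrow> nat \<Rightarrow> real mat \<Rightarrow> real vec \<Rightarrow> bool" where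
  "in_WT p T P w \<longleftrightarrow> w \<in> carrier_vec (p * T) \<and>
     (\<forall>k<T. quad P (vec p (\<lambda>i. w $ (k * p + i))) \<le> 1)"

definition pwb_level :: "nat \<Rightarrow> nat \<Rightarrow> real mat \<Rightarrow> real mat \<Rightarrow> real mat \<Rightarrow> real mat \<Rightarrow> real vec
   \<Rightarrow> real \<Rightarrow> real mat \<Rightarrow> bool" where
  "pwb_level p T P C Om Ww x0 mu Phi \<longleftrightarrow>
     (\<forall>w. in_WT p T P w \<longrightarrow>
        quad (transpose_mat Phi * C * Phi - Om - mu \<cdot>\<^sub>m Ww) (x0 @\<^sub>v w) \<le> 0)"

definition blk1 :: "nat \<Rightarrow> real mat \<Rightarrow> real mat" where
  "blk1 n M = subm M 0 0 n n"
definition blk2 :: "nat \<Rightarrow> real mat \<Rightarrow> real mat" where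
  "blk2 n M = subm M n 0 (dim_row M - n) n"
definition blk3' :: "nat \<Rightarrow> real mat \<Rightarrow> real mat" where
  "blk3' n M = subm M n n (dim_row M - n) (dim_col M - n)"

definition lmi_bar :: "nat \<Rightarrow> nat \<Rightarrow> nat \<Rightarrow> nat \<Rightarrow> real mat \<Rightarrow> real mat \<Rightarrow> real mat \<Rightarrow> real mat
   \<Rightarrow> real vec \<Rightarrow> real \<Rightarrow> (nat \<Rightarrow> real) \<Rightarrow> real mat \<Rightarrow> real mat" where
  "lmi_bar n m p T P Om Ww Ch x0 mu lam Phi =
     (let X0 = colm x0 in
      blk3 (transpose_mat X0 * (blk1 n Om + mu \<cdot>\<^sub>m blk1 n Ww) * X0 - scm (\<Sum>i=1..T. lam i))
           (transpose_mat X0 * (transpose_mat (blk2 n Om) + mu \<cdot>\<^sub>m transpose_mat (blk2 n Ww)))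
           (transpose_mat X0 * transpose_mat (Phi0 n Phi) * Ch)
           ((blk2 n Om + mu \<cdot>\<^sub>m blk2 n Ww) * X0)
           (msum (p * T) (\<lambda>i. lam i \<cdot>\<^sub>m Pcal p T P i) T + blk3' n Om + mu \<cdot>\<^sub>m blk3' n Ww)
           (transpose_mat (Phiw n Phi) * Ch)
           (Ch * Phi0 n Phi * X0)
           (Ch * Phiw n Phi)
           (1\<^sub>m ((n + m) * (T+1))))"

definition lmi_single :: "nat \<Rightarrow> nat \<Rightarrow> nat \<Rightarrow> nat \<Rightarrow> real mat \<Rightarrow> real mat \<Rightarrow> real mat \<Rightarrow> real mat
   \<Rightarrow> real vec \<Rightarrow> real \<Rightarrow> real \<Rightarrow> real mat \<Rightarrow> real mat" where
  "lmi_single n m p T P Om Ww Ch x0 mu la Phi =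
     (let X0 = colm x0; omega = real T / sigma_min P in
      blk3 (transpose_mat X0 * (blk1 n Om + mu \<cdot>\<^sub>m blk1 n Ww) * X0 - scm (la * omega))
           (transpose_mat X0 * (transpose_mat (blk2 n Om) + mu \<cdot>\<^sub>m transpose_mat (blk2 n Ww)))
           (transpose_mat X0 * transpose_mat (Phi0 n Phi) * Ch)
           ((blk2 n Om + mu \<cdot>\<^sub>m blk2 n Ww) * X0)
           (la \<cdot>\<^sub>m 1\<^sub>m (p * T) + blk3' n Om + mu \<cdot>\<^sub>m blk3' n Ww)
           (transpose_mat (Phiw n Phi) * Ch)
           (Ch * Phi0 n Phi * X0)
           (Ch * Phiw n Phi)
           (1\<^sub>m ((n + m) * (T+1))))"

definition feas_pwb where
  "feas_pwb n m p T A B E P C Om Ww x0 mu Phi \<longleftrightarrow>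
     achievable n m p T A B E Phi \<and> pwb_level p T P C Om Ww x0 mu Phi"

definition feas_bar where
  "feas_bar n m p T A B E P Om Ww Ch x0 mu lam Phi \<longleftrightarrow>
     (\<forall>i\<in>{1..T}. lam i \<ge> 0) \<and> achievable n m p T A B E Phi \<and>
     psd (lmi_bar n m p T P Om Ww Ch x0 mu lam Phi)"

definition feas_single where
  "feas_single n m p T A B E P Om Ww Ch x0 mu la Phi \<longleftrightarrow>
     la \<ge> 0 \<and> achievable n m p T A B E Phi \<and>
     psd (lmi_single n m p T P Om Ww Ch x0 mu la Phi)"

text \<open>Optimal values (infima, in the extended reals: +\<infinity> if infeasible).\<close>
definition opt_pwb where
  "opt_pwb n m p T A B E P C Om Ww x0 =
     Inf {ereal mu | mu. \<exists>Phi. feas_pwb n m p T A B E P C Om Ww x0 mu Phi}"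

definition opt_bar where
  "opt_bar n m p T A B E P Om Ww Ch x0 =
     Inf {ereal mu | mu. \<exists>lam Phi. feas_bar n m p T A B E P Om Ww Ch x0 mu lam Phi}"

definition opt_single where
  "opt_single n m p T A B E P Om Ww Ch x0 =
     Inf {ereal mu | mu. \<exists>la Phi. feas_single n m p T A B E P Om Ww Ch x0 mu la Phi}"

end

theory Submission
  imports Defs "HOL-Analysis.Function_Topology"
begin

lemma sum_split_add: "(\<Sum>i<(m::nat)+r. g i) = (\<Sum>i<m. g i) + (\<Sum>a<r. g (m+a))"
  by (induction r) (auto simp: add.assoc)

lemma sum_blocks: "(\<Sum>i<(N::nat)*r. g i) = (\<Sum>k<N. \<Sum>a<r. g (k*r+a))"
proof (induction N)
  case 0 then show ?case by simp
next
  case (Suc N)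
  have "Suc N * r = N*r + r" by simp
  show ?case unfolding \<open>Suc N * r = N*r + r\<close> sum_split_add using Suc by simp
qed

lemma divmod_block: "a < (r::nat) \<Longrightarrow> (k*r+a) div r = k \<and> (k*r+a) mod r = a"
  by auto

lemma quad_sum: "M \<in> carrier_mat r r \<Longrightarrow> v \<in> carrier_vec r \<Longrightarrow>
   quad M v = (\<Sum>a<r. v$a * (\<Sum>b<r. M$$(a,b) * v$b))"
  by (auto simp: quad_def scalar_prod_def atLeast0LessThan intro!: sum.cong)

lemma quad_bdiag:
  assumes w: "w \<in> carrier_vec (N*r)" and f: "\<And>k. k < N \<Longrightarrow> f k \<in> carrier_mat r r"
  shows "w \<bullet> (bdiag N r r f *\<^sub>v w) = (\<Sum>k<N. quad (f k) (vec r (\<lambda>a. w $ (k*r+a))))"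
proof -
  let ?B = "bdiag N r r f"
  have dw: "dim_vec w = N*r" using w by auto
  have inner: "row ?B i \<bullet> w = (\<Sum>b<r. f (i div r) $$ (i mod r, b) * w $ ((i div r)*r+b))"
    if i: "i < N*r" for i
  proof -
    have idiv: "i div r < N" using i
      by (metis less_mult_imp_div_less)
    have "row ?B i \<bullet> w = (\<Sum>j<N*r. (if i div r = j div r then f (i div r) $$ (i mod r, j mod r) else 0) * w $ j)"
      unfolding scalar_prod_def bdiag_def using i dw by (auto simp: atLeast0LessThan intro!: sum.cong)
    also have "\<dots> = (\<Sum>l<N. \<Sum>b<r. (if i div r = l then f (i div r) $$ (i mod r, b) else 0) * w $ (l*r+b))"
      by (subst sum_blocks, intro sum.cong refl, auto)
    also have "\<dots> = (\<Sum>l<N. if l = i div r then (\<Sum>b<r. f (i div r) $$ (i mod r, b) * w $ (l*r+b)) else 0)"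
      by (intro sum.cong refl, auto)
    also have "\<dots> = (\<Sum>b<r. f (i div r) $$ (i mod r, b) * w $ ((i div r)*r+b))"
      using idiv by (subst sum.delta, auto)
    finally show ?thesis .
  qed
  have "w \<bullet> (?B *\<^sub>v w) = (\<Sum>i<N*r. w $ i * (row ?B i \<bullet> w))"
    unfolding scalar_prod_def[of w] using dw by (auto simp: bdiag_def atLeast0LessThan)
  also have "\<dots> = (\<Sum>i<N*r. w $ i * (\<Sum>b<r. f (i div r) $$ (i mod r, b) * w $ ((i div r)*r+b)))"
    by (intro sum.cong refl, simp add: inner)
  also have "\<dots> = (\<Sum>k<N. \<Sum>a<r. w $ (k*r+a) * (\<Sum>b<r. f k $$ (a, b) * w $ (k*r+b)))"
    by (subst sum_blocks, intro sum.cong refl, auto)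
  also have "\<dots> = (\<Sum>k<N. quad (f k) (vec r (\<lambda>a. w $ (k*r+a))))"
    by (intro sum.cong refl, subst quad_sum[OF f], auto)
  finally show ?thesis .
qed

lemma fb_mult_vec:
  assumes A: "A \<in> carrier_mat nr1 nc1" and B: "B \<in> carrier_mat nr1 nc2"
    and C: "C \<in> carrier_mat nr2 nc1" and D: "D \<in> carrier_mat nr2 nc2"
    and u1: "u1 \<in> carrier_vec nc1" and u2: "u2 \<in> carrier_vec nc2"
  shows "four_block_mat A B C D *\<^sub>v (u1 @\<^sub>v u2) = (A *\<^sub>v u1 + B *\<^sub>v u2) @\<^sub>v (C *\<^sub>v u1 + D *\<^sub>v u2)"
proof (rule eq_vecI)
  show "dim_vec (four_block_mat A B C D *\<^sub>v (u1 @\<^sub>v u2)) = dim_vec ((A *\<^sub>v u1 + B *\<^sub>v u2) @\<^sub>v (C *\<^sub>v u1 + D *\<^sub>v u2))"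
    using A B C D by auto
  fix i assume i: "i < dim_vec ((A *\<^sub>v u1 + B *\<^sub>v u2) @\<^sub>v (C *\<^sub>v u1 + D *\<^sub>v u2))"
  hence i': "i < nr1 + nr2" using A B C D by auto
  note rw = row_four_block_mat[OF A B C D]
  show "(four_block_mat A B C D *\<^sub>v (u1 @\<^sub>v u2)) $ i = ((A *\<^sub>v u1 + B *\<^sub>v u2) @\<^sub>v (C *\<^sub>v u1 + D *\<^sub>v u2)) $ i"
  proof (cases "i < nr1")
    case True
    then show ?thesis using A B C D u1 u2 i' rw(1)[OF True]
      by (simp add: scalar_prod_append[of _ nc1 _ nc2])
  next
    case False
    have "row C (i - nr1) \<in> carrier_vec nc1" "row D (i - nr1) \<in> carrier_vec nc2" using C D by auto
    then show ?thesis using A B C D u1 u2 i' rw(2)[OF False i'] False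
      by (simp add: scalar_prod_append[of _ nc1 _ nc2])
  qed
qed

lemma quad_fb:
  assumes A: "A \<in> carrier_mat nr1 nr1" and B: "B \<in> carrier_mat nr1 nr2"
    and C: "C \<in> carrier_mat nr2 nr1" and D: "D \<in> carrier_mat nr2 nr2"
    and u1: "u1 \<in> carrier_vec nr1" and u2: "u2 \<in> carrier_vec nr2"
  shows "quad (four_block_mat A B C D) (u1 @\<^sub>v u2) =
     u1 \<bullet> (A *\<^sub>v u1) + u1 \<bullet> (B *\<^sub>v u2) + u2 \<bullet> (C *\<^sub>v u1) + u2 \<bullet> (D *\<^sub>v u2)"
  unfolding quad_def fb_mult_vec[OF assms]
  using assms
  by (simp add: scalar_prod_append[of _ nr1 _ nr2] scalar_prod_add_distrib[of _ nr1] scalar_prod_add_distrib[of _ nr2])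

lemma hcat_mult_vec:
  assumes g: "g \<in> carrier_mat r g1" and h: "h \<in> carrier_mat r h1"
    and s: "s \<in> carrier_vec g1" and w: "w \<in> carrier_vec h1"
  shows "hcat g h *\<^sub>v (s @\<^sub>v w) = g *\<^sub>v s + h *\<^sub>v w"
proof -
  have z1: "(0\<^sub>m 0 g1 :: real mat) \<in> carrier_mat 0 g1" "(0\<^sub>m 0 h1 :: real mat) \<in> carrier_mat 0 h1" by auto
  have "hcat g h *\<^sub>v (s @\<^sub>v w) = (g *\<^sub>v s + h *\<^sub>v w) @\<^sub>v (0\<^sub>m 0 g1 *\<^sub>v s + 0\<^sub>m 0 h1 *\<^sub>v w)"
  proof -
    have "dim_col g = g1" "dim_col h = h1" using g h by auto
    then show ?thesis unfolding hcat_def using fb_mult_vec[OF g h z1 s w] by simp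
  qed
  also have "\<dots> = g *\<^sub>v s + h *\<^sub>v w"
    by (intro eq_vecI, insert g h, auto)
  finally show ?thesis .
qed

lemma blk3_carrier:
  assumes "a \<in> carrier_mat r1 r1" "b \<in> carrier_mat r1 r2" "c \<in> carrier_mat r1 r3"
    "d \<in> carrier_mat r2 r1" "e \<in> carrier_mat r2 r2" "f \<in> carrier_mat r2 r3"
    "g \<in> carrier_mat r3 r1" "h \<in> carrier_mat r3 r2" "i \<in> carrier_mat r3 r3"
  shows "blk3 a b c d e f g h i \<in> carrier_mat (r1+r2+r3) (r1+r2+r3)"
  using assms unfolding blk3_def hcat_def by auto

lemma quad_blk3:
  assumes a: "a \<in> carrier_mat r1 r1" and b: "b \<in> carrier_mat r1 r2" and c: "c \<in> carrier_mat r1 r3"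
    and d: "d \<in> carrier_mat r2 r1" and e: "e \<in> carrier_mat r2 r2" and f: "f \<in> carrier_mat r2 r3"
    and g: "g \<in> carrier_mat r3 r1" and h: "h \<in> carrier_mat r3 r2" and i: "i \<in> carrier_mat r3 r3"
    and s: "s \<in> carrier_vec r1" and w: "w \<in> carrier_vec r2" and z: "z \<in> carrier_vec r3"
  shows "quad (blk3 a b c d e f g h i) ((s @\<^sub>v w) @\<^sub>v z) =
     s \<bullet> (a *\<^sub>v s) + s \<bullet> (b *\<^sub>v w) + s \<bullet> (c *\<^sub>v z)
   + w \<bullet> (d *\<^sub>v s) + w \<bullet> (e *\<^sub>v w) + w \<bullet> (f *\<^sub>v z)
   + z \<bullet> (g *\<^sub>v s) + z \<bullet> (h *\<^sub>v w) + z \<bullet> (i *\<^sub>v z)"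
proof -
  have X: "four_block_mat a b d e \<in> carrier_mat (r1+r2) (r1+r2)" using a b d e by auto
  have CF: "c @\<^sub>r f \<in> carrier_mat (r1+r2) r3" using c f by auto
  have GH: "hcat g h \<in> carrier_mat r3 (r1+r2)" using g h unfolding hcat_def by auto
  have sw: "s @\<^sub>v w \<in> carrier_vec (r1+r2)" using s w by auto
  have "quad (blk3 a b c d e f g h i) ((s @\<^sub>v w) @\<^sub>v z) =
     (s @\<^sub>v w) \<bullet> (four_block_mat a b d e *\<^sub>v (s @\<^sub>v w)) + (s @\<^sub>v w) \<bullet> ((c @\<^sub>r f) *\<^sub>v z)
     + z \<bullet> (hcat g h *\<^sub>v (s @\<^sub>v w)) + z \<bullet> (i *\<^sub>v z)"
    unfolding blk3_def by (rule quad_fb[OF X CF GH i sw z])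
  also have "(s @\<^sub>v w) \<bullet> (four_block_mat a b d e *\<^sub>v (s @\<^sub>v w)) =
     s \<bullet> (a *\<^sub>v s) + s \<bullet> (b *\<^sub>v w) + w \<bullet> (d *\<^sub>v s) + w \<bullet> (e *\<^sub>v w)"
    using quad_fb[OF a b d e s w] unfolding quad_def .
  also have "(c @\<^sub>r f) *\<^sub>v z = (c *\<^sub>v z) @\<^sub>v (f *\<^sub>v z)"
    by (rule mat_mult_append[OF c f z])
  also have "(s @\<^sub>v w) \<bullet> ((c *\<^sub>v z) @\<^sub>v (f *\<^sub>v z)) = s \<bullet> (c *\<^sub>v z) + w \<bullet> (f *\<^sub>v z)"
    using s w c f z by (intro scalar_prod_append, auto)
  also have "hcat g h *\<^sub>v (s @\<^sub>v w) = g *\<^sub>v s + h *\<^sub>v w" by (rule hcat_mult_vec[OF g h s w])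
  also have "z \<bullet> (g *\<^sub>v s + h *\<^sub>v w) = z \<bullet> (g *\<^sub>v s) + z \<bullet> (h *\<^sub>v w)"
    using z g h s w by (intro scalar_prod_add_distrib[of _ r3], auto)
  finally show ?thesis by simp
qed

lemma sprod_self_nonneg: "0 \<le> (v::real vec) \<bullet> v"
  unfolding scalar_prod_def by (intro sum_nonneg, auto)

lemma sprod_self_zero: assumes v: "v \<in> carrier_vec n" and z: "(v::real vec) \<bullet> v = 0"
  shows "v = 0\<^sub>v n"
proof -
  have "\<forall>i\<in>{0..<dim_vec v}. v $ i * v $ i = 0"
    using z unfolding scalar_prod_def by (subst sum_nonneg_eq_0_iff[symmetric], auto)
  then show ?thesis using v by (intro eq_vecI, auto)
qed

lemma sym_bil: assumes M: "(M::real mat) \<in> carrier_mat n n" and s: "transpose_mat M = M"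
  and u: "u \<in> carrier_vec n" and v: "v \<in> carrier_vec n"
  shows "u \<bullet> (M *\<^sub>v v) = v \<bullet> (M *\<^sub>v u)"
proof -
  have "(transpose_mat M *\<^sub>v u) \<bullet> v = u \<bullet> (M *\<^sub>v v)" by (rule transpose_vec_mult_scalar[OF M v u])
  then show ?thesis using s M u v by (simp add: comm_scalar_prod[of _ n])
qed

lemma quad_expand: assumes M: "(M::real mat) \<in> carrier_mat n n" and s: "transpose_mat M = M"
  and v: "v \<in> carrier_vec n" and y: "y \<in> carrier_vec n"
  shows "quad M (v + t \<cdot>\<^sub>v y) = quad M v + 2 * t * (y \<bullet> (M *\<^sub>v v)) + t*t * quad M y"
proof -
  have e: "M *\<^sub>v (v + t \<cdot>\<^sub>v y) = M *\<^sub>v v + t \<cdot>\<^sub>v (M *\<^sub>v y)"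
    using M v y by (simp add: mult_add_distrib_mat_vec[of _ n n] mult_mat_vec[of _ n n])
  have "quad M (v + t \<cdot>\<^sub>v y) = v \<bullet> (M *\<^sub>v v) + t * (v \<bullet> (M *\<^sub>v y)) + t * (y \<bullet> (M *\<^sub>v v)) + t * t * (y \<bullet> (M *\<^sub>v y))"
    unfolding quad_def e using M v y
    by (simp add: add_scalar_prod_distrib[of _ n] scalar_prod_add_distrib[of _ n] algebra_simps)
  then show ?thesis unfolding quad_def using sym_bil[OF M s v y] by simp
qed

definition psd' where "psd' M n \<longleftrightarrow> M \<in> carrier_mat n n \<and> transpose_mat M = M \<and> (\<forall>v \<in> carrier_vec n. quad M v \<ge> 0)"

lemma psd_psd': "psd M \<Longrightarrow> M \<in> carrier_mat n n \<Longrightarrow> psd' M n"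
  unfolding psd_def psd'_def by auto

lemma psd_zero: assumes P: "psd' (M::real mat) n" and v: "v \<in> carrier_vec n" and q: "quad M v = 0"
  shows "M *\<^sub>v v = 0\<^sub>v n"
proof -
  have M: "M \<in> carrier_mat n n" and s: "transpose_mat M = M" and nn: "\<And>x. x \<in> carrier_vec n \<Longrightarrow> quad M x \<ge> 0"
    using P unfolding psd'_def by auto
  define y where "y = M *\<^sub>v v"
  have y: "y \<in> carrier_vec n" using M v y_def by auto
  define a where "a = y \<bullet> y"
  define c where "c = quad M y"
  have c0: "c \<ge> 0" using nn[OF y] c_def by auto
  have a0: "a \<ge> 0" unfolding a_def by (rule sprod_self_nonneg)
  define t where "t = - a / (c + 1)"
  have "0 \<le> quad M (v + t \<cdot>\<^sub>v y)" using nn v y by auto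
  also have "\<dots> = 2 * t * a + t * t * c" using quad_expand[OF M s v y, of t] q by (simp add: a_def c_def y_def)
  finally have "0 \<le> 2 * t * a + t * t * c" .
  hence h0: "0 \<le> (c+1)*(c+1) * (2 * t * a + t * t * c)" using c0 by simp
  have e1: "t*(c+1) = -a" unfolding t_def using c0 by simp
  have "(c+1)*(c+1) * (2 * t * a + t * t * c) = 2*a*(t*(c+1))*(c+1) + (t*(c+1))*(t*(c+1))*c"
    by (simp add: algebra_simps)
  also have "\<dots> = 2*a*(-a)*(c+1) + (-a)*(-a)*c" by (simp only: e1)
  also have "\<dots> = - (a * a * (c + 2))" by (simp add: algebra_simps)
  finally have "a * a * (c+2) \<le> 0" using h0 by linarith
  moreover have "a * a * (c+2) \<ge> 0" using c0 by simp
  ultimately have "a * a * (c+2) = 0" by linarith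
  hence "a = 0" using c0 by simp
  then show ?thesis using sprod_self_zero[OF y] a_def y_def by simp
qed

lemma minv_unique: assumes A: "A \<in> carrier_mat n n" and B: "B \<in> carrier_mat n n"
  and AB: "A * B = 1\<^sub>m n" and BA: "B * A = 1\<^sub>m n"
  shows "minv A = B"
proof -
  have dr: "dim_row A = n" using A by auto
  show ?thesis unfolding minv_def dr
  proof (rule the_equality)
    show "B \<in> carrier_mat n n \<and> A * B = 1\<^sub>m n \<and> B * A = 1\<^sub>m n" using B AB BA by auto
    fix N assume N: "N \<in> carrier_mat n n \<and> A * N = 1\<^sub>m n \<and> N * A = 1\<^sub>m n"
    have "N = N * (A * B)" using N AB right_mult_one_mat[of N n n] by simp
    also have "\<dots> = (N * A) * B" using N A B by (intro assoc_mult_mat[symmetric, of N n n A n B n], auto)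
    also have "\<dots> = B" using N B by simp
    finally show "N = B" .
  qed
qed

lemma minv_exists: assumes A: "(A::real mat) \<in> carrier_mat n n"
  and inj: "\<And>v. v \<in> carrier_vec n \<Longrightarrow> A *\<^sub>v v = 0\<^sub>v n \<Longrightarrow> v = 0\<^sub>v n"
  shows "minv A \<in> carrier_mat n n \<and> A * minv A = 1\<^sub>m n \<and> minv A * A = 1\<^sub>m n"
proof -
  have "det A \<noteq> 0" using det_0_iff_vec_prod_zero[OF A] inj by auto
  from det_non_zero_imp_unit[OF A this, of "()"]
  obtain B where B: "B \<in> carrier_mat n n" "B * A = 1\<^sub>m n" "A * B = 1\<^sub>m n"
    unfolding Units_def ring_mat_def by auto
  have "minv A = B" by (rule minv_unique[OF A B(1) B(3) B(2)])
  then show ?thesis using B by auto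
qed

lemma unit_entry: assumes A: "(A::real mat) \<in> carrier_mat n n" and i: "i < n" and j: "j < n"
  shows "unit_vec n i \<bullet> (A *\<^sub>v unit_vec n j) = A $$ (i,j)"
  using A i j by simp

lemma bil_sym_transpose: assumes A: "(A::real mat) \<in> carrier_mat n n"
  and s: "\<And>u v. u \<in> carrier_vec n \<Longrightarrow> v \<in> carrier_vec n \<Longrightarrow> u \<bullet> (A *\<^sub>v v) = v \<bullet> (A *\<^sub>v u)"
  shows "transpose_mat A = A"
proof (rule eq_matI)
  fix i j assume "i < dim_row A" "j < dim_col A"
  hence i: "i < n" and j: "j < n" using A by auto
  have "A $$ (j,i) = A $$ (i,j)"
    using s[of "unit_vec n j" "unit_vec n i"] unit_entry[OF A j i] unit_entry[OF A i j] by simp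
  then show "transpose_mat A $$ (i, j) = A $$ (i, j)" using i j A by simp
qed (insert A, auto)

lemma bdiag_carrier: "bdiag N r r f \<in> carrier_mat (r*N) (r*N)"
  unfolding bdiag_def by (simp add: mult.commute)

lemma transpose_bdiag: assumes f: "\<And>k. k < N \<Longrightarrow> f k \<in> carrier_mat r r \<and> transpose_mat (f k) = f k"
  shows "transpose_mat (bdiag N r r f) = bdiag N r r f"
proof (rule eq_matI)
  fix i j assume "i < dim_row (bdiag N r r f)" "j < dim_col (bdiag N r r f)"
  hence i: "i < N*r" and j: "j < N*r" unfolding bdiag_def by auto
  have r: "r > 0" using i by (cases r, auto)
  have id: "i div r < N" using i by (metis less_mult_imp_div_less)
  have im: "i mod r < r" "j mod r < r" using r by auto
  show "transpose_mat (bdiag N r r f) $$ (i, j) = bdiag N r r f $$ (i, j)"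
  proof (cases "i div r = j div r")
    case True
    have c: "f (i div r) \<in> carrier_mat r r" and t: "transpose_mat (f (i div r)) = f (i div r)" using f[OF id] by auto
    have "f (i div r) $$ (j mod r, i mod r) = transpose_mat (f (i div r)) $$ (j mod r, i mod r)"
      by (subst t, rule refl)
    also have "\<dots> = f (i div r) $$ (i mod r, j mod r)" using c im by simp
    finally show ?thesis using i j True unfolding bdiag_def by simp
  qed (insert i j, auto simp: bdiag_def)
qed (auto simp: bdiag_def)

lemma psd_bdiag: assumes f: "\<And>k. k < N \<Longrightarrow> psd' (f k) r"
  shows "psd' (bdiag N r r f) (N*r)"
proof -
  have fc: "\<And>k. k < N \<Longrightarrow> f k \<in> carrier_mat r r" using f unfolding psd'_def by auto
  have "transpose_mat (bdiag N r r f) = bdiag N r r f"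
    by (rule transpose_bdiag, insert f, auto simp: psd'_def)
  moreover have "quad (bdiag N r r f) v \<ge> 0" if v: "v \<in> carrier_vec (N*r)" for v
  proof -
    have "quad (bdiag N r r f) v = (\<Sum>k<N. quad (f k) (vec r (\<lambda>a. v $ (k*r+a))))"
      using quad_bdiag[OF v fc] by (simp add: quad_def[of "bdiag N r r f"])
    also have "\<dots> \<ge> 0" by (intro sum_nonneg, insert f, auto simp: psd'_def)
    finally show ?thesis .
  qed
  ultimately show ?thesis unfolding psd'_def using bdiag_carrier[of N r f] by (auto simp: mult.commute)
qed

lemma pd_psd': "pd M \<Longrightarrow> M \<in> carrier_mat r r \<Longrightarrow> psd' M r"
proof -
  assume pd: "pd M" and M: "M \<in> carrier_mat r r"
  have "quad M v \<ge> 0" if v: "v \<in> carrier_vec r" for v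
  proof (cases "v = 0\<^sub>v r")
    case True
    then show ?thesis unfolding quad_def using M by simp
  next
    case False
    then show ?thesis using pd v M unfolding pd_def by fastforce
  qed
  then show ?thesis using pd M unfolding pd_def psd'_def by auto
qed

lemma pd_bdiag_inj: assumes f: "\<And>k. k < N \<Longrightarrow> pd (f k) \<and> f k \<in> carrier_mat r r"
  and v: "v \<in> carrier_vec (N*r)" and z: "bdiag N r r f *\<^sub>v v = 0\<^sub>v (N*r)"
  shows "v = 0\<^sub>v (N*r)"
proof -
  have fc: "\<And>k. k < N \<Longrightarrow> f k \<in> carrier_mat r r" using f by auto
  have "v \<bullet> (bdiag N r r f *\<^sub>v v) = 0" using z v by simp
  hence s0: "(\<Sum>k<N. quad (f k) (vec r (\<lambda>a. v $ (k*r+a)))) = 0" using quad_bdiag[OF v fc] by simp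
  have nn: "\<And>k. k < N \<Longrightarrow> quad (f k) (vec r (\<lambda>a. v $ (k*r+a))) \<ge> 0"
    using f pd_psd' unfolding psd'_def by fastforce
  have all0: "\<And>k. k < N \<Longrightarrow> quad (f k) (vec r (\<lambda>a. v $ (k*r+a))) = 0"
    using s0 nn by (subst (asm) sum_nonneg_eq_0_iff, auto)
  have blk0: "vec r (\<lambda>a. v $ (k*r+a)) = 0\<^sub>v r" if k: "k < N" for k
  proof (rule ccontr)
    assume "vec r (\<lambda>a. v $ (k*r+a)) \<noteq> 0\<^sub>v r"
    hence "quad (f k) (vec r (\<lambda>a. v $ (k*r+a))) > 0" using f[OF k] unfolding pd_def by auto
    with all0[OF k] show False by simp
  qed
  show ?thesis
  proof (rule eq_vecI)
    fix i assume "i < dim_vec (0\<^sub>v (N * r))"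
    hence i: "i < N*r" by simp
    have r: "r > 0" using i by (cases r, auto)
    have id: "i div r < N" using i by (metis less_mult_imp_div_less)
    have "v $ i = vec r (\<lambda>a. v $ (i div r * r + a)) $ (i mod r)" using r by simp
    also have "\<dots> = 0" using blk0[OF id] r by simp
    finally show "v $ i = 0\<^sub>v (N * r) $ i" using i by simp
  qed (insert v, auto)
qed

context
  fixes n m p T :: nat and Q R :: "nat \<Rightarrow> real mat" and F G :: "real mat"
  assumes Q_psd: "\<And>k. k \<le> T \<Longrightarrow> Q k \<in> carrier_mat n n \<and> psd (Q k)"
    and R_pd: "\<And>k. k \<le> T \<Longrightarrow> R k \<in> carrier_mat m m \<and> pd (R k)"
    and F_dim: "F \<in> carrier_mat (n * (T+1)) (m * (T+1))"
    and G_dim: "G \<in> carrier_mat (n * (T+1)) (n + p * T)"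
begin

lemma Qc_psd: "psd' (Qcal n T Q) (n*(T+1))"
proof -
  have "psd' (bdiag (T+1) n n Q) ((T+1)*n)"
    by (rule psd_bdiag, insert Q_psd psd_psd', auto)
  then show ?thesis unfolding Qcal_def by (simp add: mult.commute)
qed

lemma Qc_carrier: "Qcal n T Q \<in> carrier_mat (n*(T+1)) (n*(T+1))"
  using Qc_psd unfolding psd'_def by auto

lemma Rc_psd: "psd' (Rcal m T R) (m*(T+1))"
proof -
  have "psd' (bdiag (T+1) m m R) ((T+1)*m)"
    by (rule psd_bdiag, insert R_pd pd_psd', auto)
  then show ?thesis unfolding Rcal_def by (simp add: mult.commute)
qed

lemma Rc_carrier: "Rcal m T R \<in> carrier_mat (m*(T+1)) (m*(T+1))"
  using Rc_psd unfolding psd'_def by auto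

lemma Rc_inj: "v \<in> carrier_vec (m*(T+1)) \<Longrightarrow> Rcal m T R *\<^sub>v v = 0\<^sub>v (m*(T+1)) \<Longrightarrow> v = 0\<^sub>v (m*(T+1))"
  using pd_bdiag_inj[of "T+1" R m v] R_pd unfolding Rcal_def by (auto simp: mult.commute)

definition "Ri = minv (Rcal m T R)"

lemma Ri_props: "Ri \<in> carrier_mat (m*(T+1)) (m*(T+1)) \<and> Rcal m T R * Ri = 1\<^sub>m (m*(T+1)) \<and> Ri * Rcal m T R = 1\<^sub>m (m*(T+1))"
  unfolding Ri_def by (rule minv_exists[OF Rc_carrier Rc_inj])

lemma Ri_sym: "transpose_mat Ri = Ri"
proof -
  have c: "Ri \<in> carrier_mat (m*(T+1)) (m*(T+1))" and a: "Rcal m T R * Ri = 1\<^sub>m (m*(T+1))" and b: "Ri * Rcal m T R = 1\<^sub>m (m*(T+1))"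
    using Ri_props by auto
  have s: "transpose_mat (Rcal m T R) = Rcal m T R" using Rc_psd unfolding psd'_def by auto
  have "Rcal m T R * transpose_mat Ri = transpose_mat (Ri * Rcal m T R)"
    using transpose_mult[OF c Rc_carrier] s by simp
  also have "\<dots> = 1\<^sub>m (m*(T+1))" using b by simp
  finally have 1: "Rcal m T R * transpose_mat Ri = 1\<^sub>m (m*(T+1))" .
  have "transpose_mat Ri * Rcal m T R = transpose_mat (Rcal m T R * Ri)"
    using transpose_mult[OF Rc_carrier c] s by simp
  also have "\<dots> = 1\<^sub>m (m*(T+1))" using a by simp
  finally have 2: "transpose_mat Ri * Rcal m T R = 1\<^sub>m (m*(T+1))" .
  have "minv (Rcal m T R) = transpose_mat Ri"
    by (rule minv_unique[OF Rc_carrier _ 1 2], insert c, auto)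
  then show ?thesis unfolding Ri_def by simp
qed

lemma Ri_psd: "psd' Ri (m*(T+1))"
proof -
  have c: "Ri \<in> carrier_mat (m*(T+1)) (m*(T+1))" and a: "Rcal m T R * Ri = 1\<^sub>m (m*(T+1))"
    using Ri_props by auto
  have "quad Ri x \<ge> 0" if x: "x \<in> carrier_vec (m*(T+1))" for x
  proof -
    define y where "y = Ri *\<^sub>v x"
    have y: "y \<in> carrier_vec (m*(T+1))" using c x y_def by auto
    have "Rcal m T R *\<^sub>v y = (Rcal m T R * Ri) *\<^sub>v x" using c x Rc_carrier y_def by simp
    also have "\<dots> = x" using a x by simp
    finally have xy: "x = Rcal m T R *\<^sub>v y" by simp
    have "quad Ri x = x \<bullet> y" unfolding quad_def y_def ..
    also have "\<dots> = (Rcal m T R *\<^sub>v y) \<bullet> y" using xy by simp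
    also have "\<dots> = y \<bullet> (Rcal m T R *\<^sub>v y)" using y Rc_carrier by (intro comm_scalar_prod[of _ "m*(T+1)"], auto)
    also have "\<dots> \<ge> 0" using Rc_psd y unfolding psd'_def quad_def by auto
    finally show ?thesis .
  qed
  then show ?thesis unfolding psd'_def using c Ri_sym by auto
qed

definition "Sm = F * Ri * transpose_mat F"

lemma Sm_psd: "psd' Sm (n*(T+1))"
proof -
  have c: "Ri \<in> carrier_mat (m*(T+1)) (m*(T+1))" using Ri_props by auto
  have SC: "Sm \<in> carrier_mat (n*(T+1)) (n*(T+1))" unfolding Sm_def using F_dim c by auto
  have "transpose_mat Sm = transpose_mat (transpose_mat F) * transpose_mat (F * Ri)"
    unfolding Sm_def by (rule transpose_mult, insert F_dim c, auto)
  also have "\<dots> = F * (transpose_mat Ri * transpose_mat F)"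
    using transpose_mult[OF F_dim c] by simp
  also have "\<dots> = Sm" unfolding Sm_def Ri_sym using F_dim c by (simp add: assoc_mult_mat[of _ "n*(T+1)" "m*(T+1)" _ "m*(T+1)" _ "n*(T+1)"])
  finally have s: "transpose_mat Sm = Sm" .
  have "quad Sm x \<ge> 0" if x: "x \<in> carrier_vec (n*(T+1))" for x
  proof -
    define y where "y = transpose_mat F *\<^sub>v x"
    have y: "y \<in> carrier_vec (m*(T+1))" using F_dim x y_def by auto
    have "Sm *\<^sub>v x = (F * Ri) *\<^sub>v (transpose_mat F *\<^sub>v x)"
      unfolding Sm_def by (rule assoc_mult_mat_vec, insert F_dim c x, auto)
    also have "\<dots> = F *\<^sub>v (Ri *\<^sub>v y)" unfolding y_def
      by (rule assoc_mult_mat_vec, insert F_dim c x, auto)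
    finally have "Sm *\<^sub>v x = F *\<^sub>v (Ri *\<^sub>v y)" .
    hence "quad Sm x = x \<bullet> (F *\<^sub>v (Ri *\<^sub>v y))" unfolding quad_def by simp
    also have "\<dots> = (transpose_mat F *\<^sub>v x) \<bullet> (Ri *\<^sub>v y)"
      by (rule transpose_vec_mult_scalar[symmetric, OF F_dim _ x], insert c y, auto)
    also have "\<dots> = quad Ri y" unfolding quad_def y_def ..
    also have "\<dots> \<ge> 0" using Ri_psd y unfolding psd'_def by auto
    finally show ?thesis .
  qed
  then show ?thesis unfolding psd'_def using SC s by auto
qed

lemma Sm_carrier: "Sm \<in> carrier_mat (n*(T+1)) (n*(T+1))" using Sm_psd unfolding psd'_def by auto

definition "Kc = 1\<^sub>m (n*(T+1)) + Sm * Qcal n T Q"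

lemma Kc_carrier: "Kc \<in> carrier_mat (n*(T+1)) (n*(T+1))"
  unfolding Kc_def using Sm_carrier Qc_carrier by auto

lemma Kc_mult: "v \<in> carrier_vec (n*(T+1)) \<Longrightarrow> Kc *\<^sub>v v = v + Sm *\<^sub>v (Qcal n T Q *\<^sub>v v)"
  unfolding Kc_def using Sm_carrier Qc_carrier
  by (subst add_mult_distrib_mat_vec[of _ "n*(T+1)" "n*(T+1)"], auto)

lemma Kc_inj: assumes v: "v \<in> carrier_vec (n*(T+1))" and z: "Kc *\<^sub>v v = 0\<^sub>v (n*(T+1))"
  shows "v = 0\<^sub>v (n*(T+1))"
proof -
  let ?N = "n*(T+1)"
  let ?Q = "Qcal n T Q"
  have qv: "?Q *\<^sub>v v \<in> carrier_vec ?N" using Qc_carrier v by auto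
  have sq: "Sm *\<^sub>v (?Q *\<^sub>v v) \<in> carrier_vec ?N" using Sm_carrier qv by auto
  have "v + Sm *\<^sub>v (?Q *\<^sub>v v) = 0\<^sub>v ?N" using Kc_mult[OF v] z by simp
  note h = this
  have vm: "v = - (Sm *\<^sub>v (?Q *\<^sub>v v))"
  proof (rule eq_vecI)
    fix i assume i: "i < dim_vec (- (Sm *\<^sub>v (?Q *\<^sub>v v)))"
    hence "(v + Sm *\<^sub>v (?Q *\<^sub>v v)) $ i = 0" using h sq Sm_carrier by simp
    then show "v $ i = (- (Sm *\<^sub>v (?Q *\<^sub>v v))) $ i" using i v sq by simp
  qed (insert v sq Sm_carrier, auto)
  have "quad ?Q v = (?Q *\<^sub>v v) \<bullet> v" unfolding quad_def using qv v by (intro comm_scalar_prod[of _ ?N], auto)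
  also have "\<dots> = - ((?Q *\<^sub>v v) \<bullet> (Sm *\<^sub>v (?Q *\<^sub>v v)))"
  proof -
    have "(?Q *\<^sub>v v) \<bullet> v = (?Q *\<^sub>v v) \<bullet> (- (Sm *\<^sub>v (?Q *\<^sub>v v)))"
      by (rule arg_cong[where f="\<lambda>z. (?Q *\<^sub>v v) \<bullet> z", OF vm])
    also have "\<dots> = - ((?Q *\<^sub>v v) \<bullet> (Sm *\<^sub>v (?Q *\<^sub>v v)))"
    proof (rule scalar_prod_uminus_right)
      show "dim_vec (?Q *\<^sub>v v) = dim_vec (Sm *\<^sub>v (?Q *\<^sub>v v))" using qv sq by (metis carrier_vecD)
    qed
    finally show ?thesis .
  qed
  also have "\<dots> = - quad Sm (?Q *\<^sub>v v)" unfolding quad_def ..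
  finally have "quad ?Q v \<le> 0" using Sm_psd qv unfolding psd'_def by auto
  moreover have "quad ?Q v \<ge> 0" using Qc_psd v unfolding psd'_def by auto
  ultimately have "quad ?Q v = 0" by simp
  hence q0: "?Q *\<^sub>v v = 0\<^sub>v ?N" by (rule psd_zero[OF Qc_psd v])
  have s0: "Sm *\<^sub>v 0\<^sub>v ?N = 0\<^sub>v ?N" by (rule eq_vecI, insert Sm_carrier, auto)
  have "v = - 0\<^sub>v ?N" using vm unfolding q0 s0 .
  then show ?thesis by (intro eq_vecI, auto)
qed

definition "Mk = minv Kc"

lemma Mk_props: "Mk \<in> carrier_mat (n*(T+1)) (n*(T+1)) \<and> Kc * Mk = 1\<^sub>m (n*(T+1)) \<and> Mk * Kc = 1\<^sub>m (n*(T+1))"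
  unfolding Mk_def by (rule minv_exists[OF Kc_carrier Kc_inj])

lemma QM_sym: assumes a: "a \<in> carrier_vec (n*(T+1))" and b: "b \<in> carrier_vec (n*(T+1))"
  shows "a \<bullet> (Qcal n T Q *\<^sub>v (Mk *\<^sub>v b)) = b \<bullet> (Qcal n T Q *\<^sub>v (Mk *\<^sub>v a))"
proof -
  let ?N = "n*(T+1)"
  let ?Q = "Qcal n T Q"
  have Mc: "Mk \<in> carrier_mat ?N ?N" and KM: "Kc * Mk = 1\<^sub>m ?N" using Mk_props by auto
  have Qs: "transpose_mat ?Q = ?Q" using Qc_psd unfolding psd'_def by auto
  have Ss: "transpose_mat Sm = Sm" using Sm_psd unfolding psd'_def by auto
  have hback: "Kc *\<^sub>v (Mk *\<^sub>v x) = x" if x: "x \<in> carrier_vec ?N" for x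
  proof -
    have "Kc *\<^sub>v (Mk *\<^sub>v x) = (Kc * Mk) *\<^sub>v x" using Kc_carrier Mc x by simp
    then show ?thesis using KM x by simp
  qed
  have key: "x \<bullet> (?Q *\<^sub>v (Mk *\<^sub>v y)) = (Mk *\<^sub>v x) \<bullet> (?Q *\<^sub>v (Mk *\<^sub>v y)) + (?Q *\<^sub>v (Mk *\<^sub>v x)) \<bullet> (Sm *\<^sub>v (?Q *\<^sub>v (Mk *\<^sub>v y)))"
    if x: "x \<in> carrier_vec ?N" and y: "y \<in> carrier_vec ?N" for x y
  proof -
    define x' where "x' = Mk *\<^sub>v x"
    define y' where "y' = Mk *\<^sub>v y"
    have x': "x' \<in> carrier_vec ?N" and y': "y' \<in> carrier_vec ?N" using Mc x y x'_def y'_def by auto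
    have qx: "?Q *\<^sub>v x' \<in> carrier_vec ?N" and qy: "?Q *\<^sub>v y' \<in> carrier_vec ?N" using Qc_carrier x' y' by auto
    have sqx: "Sm *\<^sub>v (?Q *\<^sub>v x') \<in> carrier_vec ?N" using Sm_carrier qx by auto
    have "x = Kc *\<^sub>v x'" using hback[OF x] x'_def by simp
    also have "\<dots> = x' + Sm *\<^sub>v (?Q *\<^sub>v x')" by (rule Kc_mult[OF x'])
    finally have "x \<bullet> (?Q *\<^sub>v y') = (x' + Sm *\<^sub>v (?Q *\<^sub>v x')) \<bullet> (?Q *\<^sub>v y')" by simp
    also have "\<dots> = x' \<bullet> (?Q *\<^sub>v y') + (Sm *\<^sub>v (?Q *\<^sub>v x')) \<bullet> (?Q *\<^sub>v y')"
      by (rule add_scalar_prod_distrib[OF x' sqx qy])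
    also have "(Sm *\<^sub>v (?Q *\<^sub>v x')) \<bullet> (?Q *\<^sub>v y') = (?Q *\<^sub>v y') \<bullet> (Sm *\<^sub>v (?Q *\<^sub>v x'))"
      by (rule comm_scalar_prod[OF sqx qy])
    also have "\<dots> = (?Q *\<^sub>v x') \<bullet> (Sm *\<^sub>v (?Q *\<^sub>v y'))"
      by (rule sym_bil[OF Sm_carrier Ss qy qx])
    finally show ?thesis unfolding x'_def y'_def .
  qed
  have "a \<bullet> (?Q *\<^sub>v (Mk *\<^sub>v b)) = (Mk *\<^sub>v a) \<bullet> (?Q *\<^sub>v (Mk *\<^sub>v b)) + (?Q *\<^sub>v (Mk *\<^sub>v a)) \<bullet> (Sm *\<^sub>v (?Q *\<^sub>v (Mk *\<^sub>v b)))"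
    by (rule key[OF a b])
  also have "(Mk *\<^sub>v a) \<bullet> (?Q *\<^sub>v (Mk *\<^sub>v b)) = (Mk *\<^sub>v b) \<bullet> (?Q *\<^sub>v (Mk *\<^sub>v a))"
    by (rule sym_bil[OF Qc_carrier Qs], insert Mc a b, auto)
  also have "(?Q *\<^sub>v (Mk *\<^sub>v a)) \<bullet> (Sm *\<^sub>v (?Q *\<^sub>v (Mk *\<^sub>v b))) = (?Q *\<^sub>v (Mk *\<^sub>v b)) \<bullet> (Sm *\<^sub>v (?Q *\<^sub>v (Mk *\<^sub>v a)))"
    by (rule sym_bil[OF Sm_carrier Ss], insert Qc_carrier Mc a b, auto)
  also have "(Mk *\<^sub>v b) \<bullet> (?Q *\<^sub>v (Mk *\<^sub>v a)) + (?Q *\<^sub>v (Mk *\<^sub>v b)) \<bullet> (Sm *\<^sub>v (?Q *\<^sub>v (Mk *\<^sub>v a))) = b \<bullet> (?Q *\<^sub>v (Mk *\<^sub>v a))"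
    by (rule key[OF b a, symmetric])
  finally show ?thesis .
qed

lemma Ocal_eq: "Ocal n m T Q R F G = transpose_mat G * Qcal n T Q * Mk * G"
  unfolding Ocal_def Mk_def Kc_def Sm_def Ri_def ..

lemma O_carrier: "Ocal n m T Q R F G \<in> carrier_mat (n + p*T) (n + p*T)"
  unfolding Ocal_def using G_dim by auto

lemma O_sym: "transpose_mat (Ocal n m T Q R F G) = Ocal n m T Q R F G"
proof (rule bil_sym_transpose[OF O_carrier])
  let ?N = "n*(T+1)"
  let ?Q = "Qcal n T Q"
  have Mc: "Mk \<in> carrier_mat ?N ?N" using Mk_props by auto
  have mv: "Ocal n m T Q R F G *\<^sub>v v = transpose_mat G *\<^sub>v (?Q *\<^sub>v (Mk *\<^sub>v (G *\<^sub>v v)))"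
    if v: "v \<in> carrier_vec (n + p*T)" for v
  proof -
    have "(transpose_mat G * ?Q * Mk * G) *\<^sub>v v = (transpose_mat G * ?Q * Mk) *\<^sub>v (G *\<^sub>v v)"
      by (rule assoc_mult_mat_vec, insert G_dim Mc Qc_carrier v, auto)
    also have "\<dots> = (transpose_mat G * ?Q) *\<^sub>v (Mk *\<^sub>v (G *\<^sub>v v))"
      by (rule assoc_mult_mat_vec, insert G_dim Mc Qc_carrier v, auto)
    also have "\<dots> = transpose_mat G *\<^sub>v (?Q *\<^sub>v (Mk *\<^sub>v (G *\<^sub>v v)))"
      by (rule assoc_mult_mat_vec, insert G_dim Mc Qc_carrier v, auto)
    finally show ?thesis unfolding Ocal_eq .
  qed
  have tv: "u \<bullet> (transpose_mat G *\<^sub>v z) = (G *\<^sub>v u) \<bullet> z" if u: "u \<in> carrier_vec (n + p*T)" and z: "z \<in> carrier_vec ?N" for u z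
  proof -
    have "(transpose_mat G *\<^sub>v z) \<bullet> u = z \<bullet> (G *\<^sub>v u)" by (rule transpose_vec_mult_scalar[OF G_dim u z])
    then show ?thesis using u z G_dim by (simp add: comm_scalar_prod[of _ "n+p*T"] comm_scalar_prod[of _ ?N])
  qed
  fix u v :: "real vec" assume u: "u \<in> carrier_vec (n + p*T)" and v: "v \<in> carrier_vec (n + p*T)"
  have gu: "G *\<^sub>v u \<in> carrier_vec ?N" and gv: "G *\<^sub>v v \<in> carrier_vec ?N" using G_dim u v by auto
  have "u \<bullet> (Ocal n m T Q R F G *\<^sub>v v) = (G *\<^sub>v u) \<bullet> (?Q *\<^sub>v (Mk *\<^sub>v (G *\<^sub>v v)))"
    unfolding mv[OF v] by (rule tv[OF u], insert Qc_carrier Mc gv, auto)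
  also have "\<dots> = (G *\<^sub>v v) \<bullet> (?Q *\<^sub>v (Mk *\<^sub>v (G *\<^sub>v u)))" by (rule QM_sym[OF gu gv])
  also have "\<dots> = v \<bullet> (Ocal n m T Q R F G *\<^sub>v u)"
    unfolding mv[OF u] by (rule tv[OF v, symmetric], insert Qc_carrier Mc gu, auto)
  finally show "u \<bullet> (Ocal n m T Q R F G *\<^sub>v v) = v \<bullet> (Ocal n m T Q R F G *\<^sub>v u)" .
qed

end

lemma rayleigh_min:
  fixes P :: "real mat"
  assumes P: "P \<in> carrier_mat p p" and p: "p > 0"
  shows "\<exists>u \<in> carrier_vec p. u \<bullet> u = 1 \<and> (\<forall>v \<in> carrier_vec p. v \<bullet> v = 1 \<longrightarrow> quad P u \<le> quad P v)"
proof -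
  define Box where "Box = Pi UNIV (\<lambda>i::nat. if i < p then {-1..(1::real)} else {0})"
  define K where "K = Box \<inter> {f. (\<Sum>i<p. f i * f i) = 1}"
  define phi where "phi = (\<lambda>f::nat\<Rightarrow>real. \<Sum>a<p. f a * (\<Sum>b<p. P $$ (a,b) * f b))"
  have cB: "compact Box"
  proof -
    have "compactin (product_topology (\<lambda>i. euclidean) UNIV) (Pi\<^sub>E UNIV (\<lambda>i::nat. if i < p then {-1..(1::real)} else {0}))"
      by (subst compactin_PiE, auto simp: compactin_euclidean_iff)
    then show ?thesis unfolding Box_def euclidean_product_topology PiE_UNIV_domain compactin_euclidean_iff .
  qed
  have cl: "closed {f::nat\<Rightarrow>real. (\<Sum>i<p. f i * f i) = 1}"
    by (rule closed_Collect_eq, intro continuous_intros continuous_on_product_coordinates, auto)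
  have cK: "compact K" unfolding K_def by (rule compact_Int_closed[OF cB cl])
  define e0 where "e0 = (\<lambda>i::nat. if i = 0 then (1::real) else 0)"
  have "(\<Sum>i<p. e0 i * e0 i) = (\<Sum>i<p. if i = 0 then 1 else (0::real))"
    by (rule sum.cong, auto simp: e0_def)
  also have "\<dots> = 1" using p by (subst sum.delta, auto)
  finally have "e0 \<in> K" unfolding K_def Box_def using p by (auto simp: e0_def)
  hence ne: "K \<noteq> {}" by auto
  have coord: "\<And>a. continuous_on K (\<lambda>x::nat\<Rightarrow>real. x a)"
    by (rule continuous_on_subset[OF continuous_on_product_coordinates], auto)
  have cphi: "continuous_on K phi" unfolding phi_def
    by (intro continuous_intros coord)
  obtain f where fK: "f \<in> K" and fmin: "\<And>g. g \<in> K \<Longrightarrow> phi f \<le> phi g"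
    using continuous_attains_inf[OF cK ne cphi] by auto
  define u where "u = vec p f"
  have u: "u \<in> carrier_vec p" unfolding u_def by simp
  have quadphi: "quad P (vec p g) = phi g" for g
    unfolding phi_def by (subst quad_sum[OF P], auto)
  have uu: "u \<bullet> u = 1" using fK unfolding u_def K_def scalar_prod_def by (auto simp: atLeast0LessThan)
  have "quad P u \<le> quad P v" if v: "v \<in> carrier_vec p" and vv: "v \<bullet> v = 1" for v
  proof -
    define g where "g = (\<lambda>i. if i < p then v $ i else 0)"
    have sq: "(\<Sum>i<p. g i * g i) = 1" using vv v unfolding g_def scalar_prod_def by (auto simp: atLeast0LessThan)
    have "g i \<in> {-1..1}" if i: "i < p" for i
    proof -
      have "g i * g i \<le> (\<Sum>j<p. g j * g j)"
        by (rule member_le_sum[of i "{..<p}" "\<lambda>j. g j * g j"], insert i, auto)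
      hence "g i * g i \<le> 1" using sq by simp
      hence "\<bar>g i\<bar> \<le> 1" by (metis abs_le_square_iff abs_mult_self_eq power2_eq_square abs_one one_power2)
      then show ?thesis by auto
    qed
    hence "g \<in> K" unfolding K_def Box_def using sq by (auto simp: g_def)
    hence "phi f \<le> phi g" by (rule fmin)
    moreover have "vec p g = v" using v unfolding g_def by (intro eq_vecI, auto)
    ultimately show ?thesis using quadphi[of f] quadphi[of g] unfolding u_def by simp
  qed
  then show ?thesis using u uu by blast
qed

lemma quad_zero: "P \<in> carrier_mat p p \<Longrightarrow> quad P (0\<^sub>v p) = 0"
  unfolding quad_def by simp

lemma quad_smult: assumes P: "(P::real mat) \<in> carrier_mat p p" and v: "v \<in> carrier_vec p"
  shows "quad P (c \<cdot>\<^sub>v v) = c * c * quad P v"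
  unfolding quad_def using P v by (simp add: mult_mat_vec[OF P v])

lemma sigma_bound:
  fixes P :: "real mat"
  assumes P: "P \<in> carrier_mat p p" and pdP: "pd P" and p: "p > 0"
  shows "sigma_min P > 0 \<and> (\<forall>v\<in>carrier_vec p. sigma_min P * (v \<bullet> v) \<le> quad P v)"
proof -
  obtain u where u: "u \<in> carrier_vec p" and uu: "u \<bullet> u = 1"
    and umin: "\<And>v. v \<in> carrier_vec p \<Longrightarrow> v \<bullet> v = 1 \<Longrightarrow> quad P u \<le> quad P v"
    using rayleigh_min[OF P p] by auto
  define m0 where "m0 = quad P u"
  have dP: "dim_row P = p" using P by auto
  have u0: "u \<noteq> 0\<^sub>v p" using uu by auto
  have m0pos: "m0 > 0" using pdP u u0 unfolding pd_def m0_def dP by auto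
  have ray: "m0 * (v \<bullet> v) \<le> quad P v" if v: "v \<in> carrier_vec p" for v
  proof (cases "v = 0\<^sub>v p")
    case True
    then show ?thesis using P quad_zero[OF P] by simp
  next
    case False
    have vv: "v \<bullet> v > 0" using sprod_self_nonneg[of v] sprod_self_zero[OF v] False by fastforce
    define c where "c = 1 / sqrt (v \<bullet> v)"
    have cc: "c * c * (v \<bullet> v) = 1" unfolding c_def using vv
      by (simp add: field_simps)
    have w: "c \<cdot>\<^sub>v v \<in> carrier_vec p" using v by simp
    have "(c \<cdot>\<^sub>v v) \<bullet> (c \<cdot>\<^sub>v v) = c * c * (v \<bullet> v)" using v by simp
    hence ww: "(c \<cdot>\<^sub>v v) \<bullet> (c \<cdot>\<^sub>v v) = 1" using cc by simp
    have "m0 \<le> quad P (c \<cdot>\<^sub>v v)" unfolding m0_def by (rule umin[OF w ww])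
    also have "\<dots> = c * c * quad P v" by (rule quad_smult[OF P v])
    finally have "m0 \<le> c * c * quad P v" .
    hence "m0 * (v \<bullet> v) \<le> c * c * quad P v * (v \<bullet> v)" using vv by (simp add: mult_right_mono)
    also have "\<dots> = quad P v" using cc by (simp add: algebra_simps)
    finally show ?thesis .
  qed
  define N where "N = P - m0 \<cdot>\<^sub>m 1\<^sub>m p"
  have Nc: "N \<in> carrier_mat p p" unfolding N_def using P by auto
  have Pt: "transpose_mat P = P" using pdP unfolding pd_def by auto
  have Nt: "transpose_mat N = N" unfolding N_def
  proof (rule eq_matI)
    fix i j assume "i < dim_row (P - m0 \<cdot>\<^sub>m 1\<^sub>m p)" "j < dim_col (P - m0 \<cdot>\<^sub>m 1\<^sub>m p)"
    hence i: "i < p" and j: "j < p" using P by auto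
    have "P $$ (j, i) = P $$ (i, j)" using Pt i j P by (metis carrier_matD index_transpose_mat(1))
    then show "transpose_mat (P - m0 \<cdot>\<^sub>m 1\<^sub>m p) $$ (i, j) = (P - m0 \<cdot>\<^sub>m 1\<^sub>m p) $$ (i, j)"
      using i j P by auto
  qed (insert P, auto)
  have Iv: "(m0 \<cdot>\<^sub>m 1\<^sub>m p) *\<^sub>v v = m0 \<cdot>\<^sub>v v" if v: "v \<in> carrier_vec p" for v
  proof (rule eq_vecI)
    fix i assume "i < dim_vec (m0 \<cdot>\<^sub>v v)"
    hence i: "i < p" using v by auto
    have "row (m0 \<cdot>\<^sub>m 1\<^sub>m p) i = m0 \<cdot>\<^sub>v unit_vec p i" using i by (intro eq_vecI, auto)
    then show "((m0 \<cdot>\<^sub>m 1\<^sub>m p) *\<^sub>v v) $ i = (m0 \<cdot>\<^sub>v v) $ i" using i v by simp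
  qed (insert v, auto)
  have Nv: "N *\<^sub>v v = P *\<^sub>v v - m0 \<cdot>\<^sub>v v" if v: "v \<in> carrier_vec p" for v
    unfolding N_def using P v Iv[OF v] by (simp add: minus_mult_distrib_mat_vec[of _ p p])
  have qN: "quad N v = quad P v - m0 * (v \<bullet> v)" if v: "v \<in> carrier_vec p" for v
  proof -
    have "quad N v = v \<bullet> (P *\<^sub>v v - m0 \<cdot>\<^sub>v v)" unfolding quad_def Nv[OF v] ..
    also have "\<dots> = v \<bullet> (P *\<^sub>v v) - v \<bullet> (m0 \<cdot>\<^sub>v v)"
      by (rule scalar_prod_minus_distrib[of v p], insert P v, auto)
    also have "v \<bullet> (m0 \<cdot>\<^sub>v v) = m0 * (v \<bullet> v)"
      by (rule scalar_prod_smult_distrib, insert v, auto)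
    finally show ?thesis unfolding quad_def .
  qed
  have psdN: "psd' N p" unfolding psd'_def using Nc Nt qN ray by auto
  have "quad N u = 0" using qN[OF u] uu m0_def by simp
  hence "N *\<^sub>v u = 0\<^sub>v p" by (rule psd_zero[OF psdN u])
  hence d0: "P *\<^sub>v u - m0 \<cdot>\<^sub>v u = 0\<^sub>v p" using Nv[OF u] by simp
  have Pu: "P *\<^sub>v u = m0 \<cdot>\<^sub>v u"
  proof (rule eq_vecI)
    fix i assume "i < dim_vec (m0 \<cdot>\<^sub>v u)"
    hence i: "i < p" using u by auto
    have "(P *\<^sub>v u - m0 \<cdot>\<^sub>v u) $ i = 0" using d0 i by simp
    then show "(P *\<^sub>v u) $ i = (m0 \<cdot>\<^sub>v u) $ i" using i u P by simp
  qed (insert u P, auto)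
  define S where "S = {ev. eigenvalue (transpose_mat P * P) ev}"
  have PP: "transpose_mat P * P \<in> carrier_mat p p" using P by auto
  have "(transpose_mat P * P) *\<^sub>v u = (m0 * m0) \<cdot>\<^sub>v u"
  proof -
    have "(transpose_mat P * P) *\<^sub>v u = P *\<^sub>v (P *\<^sub>v u)" using Pt P u by simp
    also have "\<dots> = m0 \<cdot>\<^sub>v (m0 \<cdot>\<^sub>v u)" unfolding Pu using P u by (simp add: mult_mat_vec[OF P u] Pu)
    also have "\<dots> = (m0 * m0) \<cdot>\<^sub>v u" by (intro eq_vecI, auto)
    finally show ?thesis .
  qed
  hence m0S: "m0 * m0 \<in> S" unfolding S_def eigenvalue_def eigenvector_def using u u0 P by auto
  have finS: "finite S"
  proof -
    have "char_poly (transpose_mat P * P) \<noteq> 0"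
      using degree_monic_char_poly[OF PP] by auto
    hence "finite {x. poly (char_poly (transpose_mat P * P)) x = 0}" by (rule poly_roots_finite)
    moreover have "S \<subseteq> {x. poly (char_poly (transpose_mat P * P)) x = 0}"
      unfolding S_def using eigenvalue_root_char_poly[OF PP] by auto
    ultimately show ?thesis using finite_subset by blast
  qed
  have Spos: "ev > 0" if ev: "ev \<in> S" for ev
  proof -
    obtain v where v: "v \<in> carrier_vec p" and v0: "v \<noteq> 0\<^sub>v p" and ev': "(transpose_mat P * P) *\<^sub>v v = ev \<cdot>\<^sub>v v"
      using ev unfolding S_def eigenvalue_def eigenvector_def using PP by auto
    have pv: "P *\<^sub>v v \<in> carrier_vec p" using P v by auto
    have qpos: "v \<bullet> (P *\<^sub>v v) > 0" using pdP v v0 unfolding pd_def quad_def dP by auto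
    have Pv0: "P *\<^sub>v v \<noteq> 0\<^sub>v p" using qpos v by auto
    have a: "(P *\<^sub>v v) \<bullet> (P *\<^sub>v v) > 0" using sprod_self_nonneg[of "P *\<^sub>v v"] sprod_self_zero[OF pv] Pv0 by fastforce
    have b: "v \<bullet> v > 0" using sprod_self_nonneg[of v] sprod_self_zero[OF v] v0 by fastforce
    have "(transpose_mat P *\<^sub>v (P *\<^sub>v v)) \<bullet> v = (P *\<^sub>v v) \<bullet> (P *\<^sub>v v)"
      by (rule transpose_vec_mult_scalar[OF P v pv])
    moreover have "transpose_mat P *\<^sub>v (P *\<^sub>v v) = ev \<cdot>\<^sub>v v" using ev' P v by simp
    ultimately have "ev * (v \<bullet> v) = (P *\<^sub>v v) \<bullet> (P *\<^sub>v v)" using v by simp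
    then show ?thesis using a b by (metis zero_less_mult_pos2)
  qed
  have Sne: "S \<noteq> {}" using m0S by auto
  have minpos: "Min S > 0" using Spos Min_in[OF finS Sne] by auto
  have minle: "Min S \<le> m0 * m0" using Min_le[OF finS m0S] .
  have sdef: "sigma_min P = sqrt (Min S)" unfolding sigma_min_def S_def ..
  have spos: "sigma_min P > 0" unfolding sdef using minpos by simp
  have "sqrt (Min S) \<le> sqrt (m0 * m0)" by (rule real_sqrt_le_mono[OF minle])
  also have "sqrt (m0 * m0) = m0" using m0pos by simp
  finally have sle: "sigma_min P \<le> m0" unfolding sdef .
  have "sigma_min P * (v \<bullet> v) \<le> quad P v" if v: "v \<in> carrier_vec p" for v
  proof -
    have "sigma_min P * (v \<bullet> v) \<le> m0 * (v \<bullet> v)" using sle sprod_self_nonneg[of v] by (rule mult_right_mono)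
    also have "\<dots> \<le> quad P v" by (rule ray[OF v])
    finally show ?thesis .
  qed
  then show ?thesis using spos by auto
qed

definition one1 :: "real vec" where "one1 = vec 1 (\<lambda>_. 1)"

lemma one1_carrier[simp]: "one1 \<in> carrier_vec 1" unfolding one1_def by simp

lemma colm_carrier[simp]: "x \<in> carrier_vec n \<Longrightarrow> colm x \<in> carrier_mat n 1"
  unfolding colm_def by auto

lemma colm_mult: assumes x: "x \<in> carrier_vec n" and s: "s \<in> carrier_vec 1"
  shows "colm x *\<^sub>v s = (s $ 0) \<cdot>\<^sub>v x"
proof (rule eq_vecI)
  fix i assume "i < dim_vec (s $ 0 \<cdot>\<^sub>v x)"
  hence i: "i < n" using x by auto
  have "row (colm x) i = vec 1 (\<lambda>_. x $ i)" using x i unfolding colm_def by (intro eq_vecI, auto simp: mat_of_cols_def)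
  then show "(colm x *\<^sub>v s) $ i = (s $ 0 \<cdot>\<^sub>v x) $ i"
    using x i s unfolding colm_def by (auto simp: scalar_prod_def)
qed (insert x, auto simp: colm_def)

lemma colmT_mult: assumes x: "x \<in> carrier_vec n" and y: "y \<in> carrier_vec n" and s: "s \<in> carrier_vec 1"
  shows "s \<bullet> (transpose_mat (colm x) *\<^sub>v y) = (s $ 0) * (x \<bullet> y)"
proof -
  have "transpose_mat (colm x) *\<^sub>v y = vec 1 (\<lambda>_. x \<bullet> y)"
  proof (rule eq_vecI)
    fix i assume "i < dim_vec (vec 1 (\<lambda>_. x \<bullet> y))"
    hence i: "i = 0" by auto
    have "row (transpose_mat (colm x)) 0 = x" using x unfolding colm_def by (intro eq_vecI, auto)
    then show "(transpose_mat (colm x) *\<^sub>v y) $ i = vec 1 (\<lambda>_. x \<bullet> y) $ i" using i x unfolding colm_def by simp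
  qed (insert x, auto simp: colm_def)
  then show ?thesis using s by (auto simp: scalar_prod_def)
qed

lemma scm_quad: assumes s: "s \<in> carrier_vec 1" shows "s \<bullet> (scm c *\<^sub>v s) = c * (s $ 0) * (s $ 0)"
  using s unfolding scm_def by (auto simp: scalar_prod_def)

lemma smult_mat_vec: assumes A: "(A::real mat) \<in> carrier_mat nr nc" and v: "v \<in> carrier_vec nc"
  shows "(a \<cdot>\<^sub>m A) *\<^sub>v v = a \<cdot>\<^sub>v (A *\<^sub>v v)"
  by (rule eq_vecI, insert A v, auto simp: scalar_prod_def sum_distrib_left ac_simps)

lemma quad_minus: assumes A: "(A::real mat) \<in> carrier_mat n n" and B: "B \<in> carrier_mat n n" and v: "v \<in> carrier_vec n"
  shows "quad (A - B) v = quad A v - quad B v"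
  unfolding quad_def using A B v
  by (simp add: minus_mult_distrib_mat_vec[OF A B v] scalar_prod_minus_distrib[of v n])

lemma quad_add: assumes A: "(A::real mat) \<in> carrier_mat n n" and B: "B \<in> carrier_mat n n" and v: "v \<in> carrier_vec n"
  shows "quad (A + B) v = quad A v + quad B v"
  unfolding quad_def using A B v
  by (simp add: add_mult_distrib_mat_vec[OF A B v] scalar_prod_add_distrib[of v n])

lemma four_block_split: assumes M: "M \<in> carrier_mat (n+k) (n+k)"
  shows "M = four_block_mat (subm M 0 0 n n) (subm M 0 n n k) (subm M n 0 k n) (subm M n n k k)"
  by (rule eq_matI, insert M, auto simp: subm_def)

lemma subm_sym: assumes M: "M \<in> carrier_mat (n+k) (n+k)" and s: "transpose_mat M = M"
  shows "subm M 0 n n k = transpose_mat (subm M n 0 k n)"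
proof (rule eq_matI)
  fix i j assume "i < dim_row (transpose_mat (subm M n 0 k n))" "j < dim_col (transpose_mat (subm M n 0 k n))"
  hence i: "i < n" and j: "j < k" by (auto simp: subm_def)
  have "M $$ (i, n + j) = transpose_mat M $$ (i, n+j)" using s by simp
  also have "\<dots> = M $$ (n+j, i)" using M i j by simp
  finally show "subm M 0 n n k $$ (i, j) = transpose_mat (subm M n 0 k n) $$ (i, j)"
    using i j by (simp add: subm_def)
qed (auto simp: subm_def)

lemma quad_split_sym: assumes M: "(M::real mat) \<in> carrier_mat (n+k) (n+k)" and s: "transpose_mat M = M"
  and x: "x \<in> carrier_vec n" and w: "w \<in> carrier_vec k"
  shows "quad M (x @\<^sub>v w) = x \<bullet> (subm M 0 0 n n *\<^sub>v x) + x \<bullet> (transpose_mat (subm M n 0 k n) *\<^sub>v w)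
     + w \<bullet> (subm M n 0 k n *\<^sub>v x) + w \<bullet> (subm M n n k k *\<^sub>v w)"
proof -
  have "quad M (x @\<^sub>v w) = quad (four_block_mat (subm M 0 0 n n) (subm M 0 n n k) (subm M n 0 k n) (subm M n n k k)) (x @\<^sub>v w)"
    using four_block_split[OF M] by simp
  also have "\<dots> = x \<bullet> (subm M 0 0 n n *\<^sub>v x) + x \<bullet> (subm M 0 n n k *\<^sub>v w)
     + w \<bullet> (subm M n 0 k n *\<^sub>v x) + w \<bullet> (subm M n n k k *\<^sub>v w)"
    by (rule quad_fb, insert x w, auto simp: subm_def)
  finally show ?thesis unfolding subm_sym[OF M s] .
qed

lemma transpose_append_rows: assumes c: "c \<in> carrier_mat r1 r3" and f: "f \<in> carrier_mat r2 r3"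
  shows "transpose_mat (c @\<^sub>r f) = hcat (transpose_mat c) (transpose_mat f)"
  unfolding append_rows_def hcat_def using c f by (subst transpose_four_block_mat, auto)

lemma transpose_hcat: assumes g: "g \<in> carrier_mat r3 r1" and h: "h \<in> carrier_mat r3 r2"
  shows "transpose_mat (hcat g h) = transpose_mat g @\<^sub>r transpose_mat h"
  unfolding append_rows_def hcat_def using g h by (subst transpose_four_block_mat, auto)

lemma transpose_blk3:
  assumes a: "a \<in> carrier_mat r1 r1" and b: "b \<in> carrier_mat r1 r2" and c: "c \<in> carrier_mat r1 r3"
    and d: "d \<in> carrier_mat r2 r1" and e: "e \<in> carrier_mat r2 r2" and f: "f \<in> carrier_mat r2 r3"
    and g: "g \<in> carrier_mat r3 r1" and h: "h \<in> carrier_mat r3 r2" and i: "i \<in> carrier_mat r3 r3"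
  shows "transpose_mat (blk3 a b c d e f g h i) = blk3 (transpose_mat a) (transpose_mat d) (transpose_mat g)
     (transpose_mat b) (transpose_mat e) (transpose_mat h) (transpose_mat c) (transpose_mat f) (transpose_mat i)"
proof -
  have X: "four_block_mat a b d e \<in> carrier_mat (r1+r2) (r1+r2)" using a b d e by auto
  have CF: "c @\<^sub>r f \<in> carrier_mat (r1+r2) r3" using c f by auto
  have GH: "hcat g h \<in> carrier_mat r3 (r1+r2)" using g h unfolding hcat_def by auto
  show ?thesis unfolding blk3_def
    using transpose_four_block_mat[OF X CF GH i] transpose_four_block_mat[OF a b d e]
      transpose_append_rows[OF c f] transpose_hcat[OF g h] by simp
qed

lemma zero_mat_mult_vec[simp]: "v \<in> carrier_vec c \<Longrightarrow> 0\<^sub>m r c *\<^sub>v v = (0\<^sub>v r :: real vec)"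
  by (intro eq_vecI, auto)

lemma msum_carrier: "(\<And>i. f i \<in> carrier_mat d d) \<Longrightarrow> msum d f k \<in> carrier_mat d d"
  by (induction k) auto

lemma msum_quad: assumes fc: "\<And>i. f i \<in> carrier_mat d d" and w: "w \<in> carrier_vec d"
  shows "w \<bullet> (msum d f k *\<^sub>v w) = (\<Sum>i=1..k. w \<bullet> (f i *\<^sub>v w))"
proof (induction k)
  case 0 then show ?case using w by (simp add: scalar_prod_right_zero[of _ d])
next
  case (Suc k)
  have mc: "msum d f k \<in> carrier_mat d d" by (rule msum_carrier, rule fc)
  have fk: "f (Suc k) \<in> carrier_mat d d" by (rule fc)
  have "w \<bullet> (msum d f (Suc k) *\<^sub>v w) = w \<bullet> (msum d f k *\<^sub>v w + f (Suc k) *\<^sub>v w)"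
    using mc fk w by (simp add: add_mult_distrib_mat_vec[of _ d d])
  also have "\<dots> = w \<bullet> (msum d f k *\<^sub>v w) + w \<bullet> (f (Suc k) *\<^sub>v w)"
    by (rule scalar_prod_add_distrib[of _ d], insert mc fk w, auto)
  finally show ?case using Suc by simp
qed

lemma msum_sym: assumes f: "\<And>i. f i \<in> carrier_mat d d \<and> transpose_mat (f i) = f i"
  shows "transpose_mat (msum d f k) = msum d f k"
proof (induction k)
  case (Suc k)
  have "transpose_mat (msum d f k + f (Suc k)) = transpose_mat (msum d f k) + transpose_mat (f (Suc k))"
    using msum_carrier[of f d k] f by (intro transpose_add, auto)
  then show ?case using Suc f by simp
qed simp

lemma Pcal_carrier: "Pcal p T P i \<in> carrier_mat (p*T) (p*T)"
  unfolding Pcal_def bdiag_def by (simp add: mult.commute)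

lemma Pcal_quad: assumes P: "P \<in> carrier_mat p p" and w: "w \<in> carrier_vec (p*T)" and i: "1 \<le> i" "i \<le> T"
  shows "w \<bullet> (Pcal p T P i *\<^sub>v w) = quad P (vec p (\<lambda>a. w $ ((i-1)*p + a)))"
proof -
  have w': "w \<in> carrier_vec (T*p)" using w by (simp add: mult.commute)
  have "w \<bullet> (Pcal p T P i *\<^sub>v w) = (\<Sum>k<T. quad (if k + 1 = i then P else 0\<^sub>m p p) (vec p (\<lambda>a. w $ (k*p+a))))"
    unfolding Pcal_def by (rule quad_bdiag[OF w'], insert P, auto)
  also have "\<dots> = (\<Sum>k<T. if k = i - 1 then quad P (vec p (\<lambda>a. w $ (k*p+a))) else 0)"
    by (rule sum.cong, insert i, auto simp: quad_def scalar_prod_right_zero[of _ p])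
  also have "\<dots> = quad P (vec p (\<lambda>a. w $ ((i-1)*p + a)))" using i by (subst sum.delta, auto)
  finally show ?thesis .
qed

lemma Pcal_sym: assumes P: "P \<in> carrier_mat p p" "transpose_mat P = P"
  shows "transpose_mat (Pcal p T P i) = Pcal p T P i"
  unfolding Pcal_def by (rule transpose_bdiag, insert P, auto)

lemma sq_blocks: assumes w: "w \<in> carrier_vec (p*T)"
  shows "w \<bullet> w = (\<Sum>k<T. vec p (\<lambda>a. w $ (k*p+a)) \<bullet> vec p (\<lambda>a. w $ (k*p+a)))"
proof -
  have "w \<bullet> w = (\<Sum>i<T*p. w $ i * w $ i)" using w unfolding scalar_prod_def by (simp add: atLeast0LessThan mult.commute)
  also have "\<dots> = (\<Sum>k<T. \<Sum>a<p. w $ (k*p+a) * w $ (k*p+a))" by (rule sum_blocks)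
  also have "\<dots> = (\<Sum>k<T. vec p (\<lambda>a. w $ (k*p+a)) \<bullet> vec p (\<lambda>a. w $ (k*p+a)))"
    unfolding scalar_prod_def by (auto simp: atLeast0LessThan)
  finally show ?thesis .
qed

lemma transpose_1x1: "a \<in> carrier_mat 1 1 \<Longrightarrow> transpose_mat a = a"
  by (rule eq_matI, auto)

lemma colm_dim[simp]: "dim_row (colm x) = dim_vec x" "dim_col (colm x) = 1"
  unfolding colm_def by auto

definition LM where
  "LM n KK x0 Ch Phi M a0 e0 = (let X0 = colm x0; dd = dim_row M - n in
     blk3 (transpose_mat X0 * subm M 0 0 n n * X0 - scm a0)
          (transpose_mat X0 * transpose_mat (subm M n 0 dd n))
          (transpose_mat X0 * transpose_mat (Phi0 n Phi) * Ch)
          (subm M n 0 dd n * X0)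
          (e0 + subm M n n dd dd)
          (transpose_mat (Phiw n Phi) * Ch)
          (Ch * Phi0 n Phi * X0)
          (Ch * Phiw n Phi)
          (1\<^sub>m KK))"

lemma Phi_parts: assumes Phi: "Phi \<in> carrier_mat K (n + d)"
  shows "Phi0 n Phi \<in> carrier_mat K n" "Phiw n Phi \<in> carrier_mat K d"
  using Phi unfolding Phi0_def Phiw_def subm_def by auto

lemma Phi_split: assumes Phi: "(Phi::real mat) \<in> carrier_mat K (n + d)" and x: "x \<in> carrier_vec n" and w: "w \<in> carrier_vec d"
  shows "Phi *\<^sub>v (x @\<^sub>v w) = Phi0 n Phi *\<^sub>v x + Phiw n Phi *\<^sub>v w"
proof (rule eq_vecI)
  fix i assume "i < dim_vec (Phi0 n Phi *\<^sub>v x + Phiw n Phi *\<^sub>v w)"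
  hence i: "i < K" using Phi_parts[OF Phi] by auto
  have r: "row Phi i = row (Phi0 n Phi) i @\<^sub>v row (Phiw n Phi) i"
    using Phi i unfolding Phi0_def Phiw_def subm_def by (intro eq_vecI, auto)
  have "(Phi *\<^sub>v (x @\<^sub>v w)) $ i = row Phi i \<bullet> (x @\<^sub>v w)" using Phi i by simp
  also have "\<dots> = row (Phi0 n Phi) i \<bullet> x + row (Phiw n Phi) i \<bullet> w"
    unfolding r by (rule scalar_prod_append, insert Phi_parts[OF Phi] x w i, auto)
  finally show "(Phi *\<^sub>v (x @\<^sub>v w)) $ i = (Phi0 n Phi *\<^sub>v x + Phiw n Phi *\<^sub>v w) $ i"
    using Phi_parts[OF Phi] x w i by simp
qed (insert Phi_parts[OF Phi] Phi, auto)

context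
  fixes n KK d :: nat and x0 :: "real vec" and Ch Phi M e0 :: "real mat" and a0 :: real
  assumes x0: "x0 \<in> carrier_vec n"
    and Ch: "Ch \<in> carrier_mat KK KK" "transpose_mat Ch = Ch"
    and Phi: "Phi \<in> carrier_mat KK (n + d)"
    and M: "M \<in> carrier_mat (n+d) (n+d)" "transpose_mat M = M"
    and e0: "e0 \<in> carrier_mat d d"
begin

lemma LM_blocks:
  defines "X0 \<equiv> colm x0"
  shows "transpose_mat X0 * subm M 0 0 n n * X0 - scm a0 \<in> carrier_mat 1 1"
    "transpose_mat X0 * transpose_mat (subm M n 0 d n) \<in> carrier_mat 1 d"
    "transpose_mat X0 * transpose_mat (Phi0 n Phi) * Ch \<in> carrier_mat 1 KK"
    "subm M n 0 d n * X0 \<in> carrier_mat d 1"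
    "e0 + subm M n n d d \<in> carrier_mat d d"
    "transpose_mat (Phiw n Phi) * Ch \<in> carrier_mat d KK"
    "Ch * Phi0 n Phi * X0 \<in> carrier_mat KK 1"
    "Ch * Phiw n Phi \<in> carrier_mat KK d"
    "1\<^sub>m KK \<in> carrier_mat KK KK"
proof -
  have X: "X0 \<in> carrier_mat n 1" unfolding X0_def by (rule colm_carrier[OF x0])
  have XT: "transpose_mat X0 \<in> carrier_mat 1 n" using X by simp
  have M1: "subm M 0 0 n n \<in> carrier_mat n n" by (simp add: subm_def)
  have M2: "subm M n 0 d n \<in> carrier_mat d n" by (simp add: subm_def)
  have M2T: "transpose_mat (subm M n 0 d n) \<in> carrier_mat n d" by (simp add: subm_def)
  have M3: "subm M n n d d \<in> carrier_mat d d" by (simp add: subm_def)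
  have P0: "Phi0 n Phi \<in> carrier_mat KK n" and Pw: "Phiw n Phi \<in> carrier_mat KK d" using Phi_parts[OF Phi] by auto
  have P0T: "transpose_mat (Phi0 n Phi) \<in> carrier_mat n KK" using P0 by simp
  have PwT: "transpose_mat (Phiw n Phi) \<in> carrier_mat d KK" using Pw by simp
  have S: "scm a0 \<in> carrier_mat 1 1" by (simp add: scm_def)
  show "transpose_mat X0 * subm M 0 0 n n * X0 - scm a0 \<in> carrier_mat 1 1"
    by (rule minus_carrier_mat[OF S])
  show "transpose_mat X0 * transpose_mat (subm M n 0 d n) \<in> carrier_mat 1 d"
    by (rule mult_carrier_mat[OF XT M2T])
  show "transpose_mat X0 * transpose_mat (Phi0 n Phi) * Ch \<in> carrier_mat 1 KK"
    by (rule mult_carrier_mat[OF mult_carrier_mat[OF XT P0T] Ch(1)])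
  show "subm M n 0 d n * X0 \<in> carrier_mat d 1" by (rule mult_carrier_mat[OF M2 X])
  show "e0 + subm M n n d d \<in> carrier_mat d d" by (rule add_carrier_mat[OF M3])
  show "transpose_mat (Phiw n Phi) * Ch \<in> carrier_mat d KK" by (rule mult_carrier_mat[OF PwT Ch(1)])
  show "Ch * Phi0 n Phi * X0 \<in> carrier_mat KK 1" by (rule mult_carrier_mat[OF mult_carrier_mat[OF Ch(1) P0] X])
  show "Ch * Phiw n Phi \<in> carrier_mat KK d" by (rule mult_carrier_mat[OF Ch(1) Pw])
  show "1\<^sub>m KK \<in> carrier_mat KK KK" by simp
qed

lemma LM_unfold: "LM n KK x0 Ch Phi M a0 e0 = blk3 (transpose_mat (colm x0) * subm M 0 0 n n * colm x0 - scm a0)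
          (transpose_mat (colm x0) * transpose_mat (subm M n 0 d n))
          (transpose_mat (colm x0) * transpose_mat (Phi0 n Phi) * Ch)
          (subm M n 0 d n * colm x0)
          (e0 + subm M n n d d)
          (transpose_mat (Phiw n Phi) * Ch)
          (Ch * Phi0 n Phi * colm x0)
          (Ch * Phiw n Phi)
          (1\<^sub>m KK)"
proof -
  have "dim_row M - n = d" using M by simp
  then show ?thesis unfolding LM_def Let_def by (simp only:)
qed

lemma LM_carrier: "LM n KK x0 Ch Phi M a0 e0 \<in> carrier_mat (1 + d + KK) (1 + d + KK)"
  unfolding LM_unfold by (rule blk3_carrier[OF LM_blocks])

lemma LM_sym: assumes e0s: "transpose_mat e0 = e0"
  shows "transpose_mat (LM n KK x0 Ch Phi M a0 e0) = LM n KK x0 Ch Phi M a0 e0"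
proof -
  let ?X = "colm x0"
  have X: "?X \<in> carrier_mat n 1" by (rule colm_carrier[OF x0])
  have P0: "Phi0 n Phi \<in> carrier_mat KK n" and Pw: "Phiw n Phi \<in> carrier_mat KK d" using Phi_parts[OF Phi] by auto
  have M2: "subm M n 0 d n \<in> carrier_mat d n" by (auto simp: subm_def)
  have M3: "subm M n n d d \<in> carrier_mat d d" by (auto simp: subm_def)
  have M3s: "transpose_mat (subm M n n d d) = subm M n n d d"
  proof (rule eq_matI)
    fix i j assume "i < dim_row (subm M n n d d)" "j < dim_col (subm M n n d d)"
    hence i: "i < d" and j: "j < d" by (auto simp: subm_def)
    have e: "transpose_mat M $$ (n+i, n+j) = M $$ (n+j, n+i)" using M(1) i j by simp
    have "M $$ (n+j, n+i) = M $$ (n+i, n+j)" using e M(2) by simp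
    then show "transpose_mat (subm M n n d d) $$ (i, j) = subm M n n d d $$ (i, j)"
      using i j by (simp add: subm_def)
  qed (auto simp: subm_def)
  have 1: "transpose_mat (transpose_mat ?X * subm M 0 0 n n * ?X - scm a0) = transpose_mat ?X * subm M 0 0 n n * ?X - scm a0"
    by (rule transpose_1x1, insert LM_blocks(1), simp)
  have 2: "transpose_mat (subm M n 0 d n * ?X) = transpose_mat ?X * transpose_mat (subm M n 0 d n)"
    by (rule transpose_mult[OF M2 X])
  have 3: "transpose_mat (Ch * Phi0 n Phi * ?X) = transpose_mat ?X * transpose_mat (Phi0 n Phi) * Ch"
  proof -
    have "transpose_mat (Ch * Phi0 n Phi * ?X) = transpose_mat ?X * transpose_mat (Ch * Phi0 n Phi)"
      by (rule transpose_mult, insert Ch P0 X, auto)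
    also have "transpose_mat (Ch * Phi0 n Phi) = transpose_mat (Phi0 n Phi) * Ch"
      using transpose_mult[OF Ch(1) P0] Ch(2) by simp
    also have "transpose_mat ?X * (transpose_mat (Phi0 n Phi) * Ch) = transpose_mat ?X * transpose_mat (Phi0 n Phi) * Ch"
      by (rule assoc_mult_mat[symmetric], insert X P0 Ch, auto)
    finally show ?thesis .
  qed
  have 4: "transpose_mat (Ch * Phiw n Phi) = transpose_mat (Phiw n Phi) * Ch"
    using transpose_mult[OF Ch(1) Pw] Ch(2) by simp
  have 5: "transpose_mat (e0 + subm M n n d d) = e0 + subm M n n d d"
    using transpose_add[OF e0 M3] e0s M3s by simp
  have t2: "transpose_mat (transpose_mat ?X * transpose_mat (subm M n 0 d n)) = subm M n 0 d n * ?X"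
    by (metis 2 transpose_transpose)
  have t3: "transpose_mat (transpose_mat ?X * transpose_mat (Phi0 n Phi) * Ch) = Ch * Phi0 n Phi * ?X"
    by (metis 3 transpose_transpose)
  have t4: "transpose_mat (transpose_mat (Phiw n Phi) * Ch) = Ch * Phiw n Phi"
    by (metis 4 transpose_transpose)
  show ?thesis unfolding LM_unfold transpose_blk3[OF LM_blocks]
    unfolding 1 2 3 4 5 t2 t3 t4 by simp
qed

lemma LM_quad: assumes s: "s \<in> carrier_vec 1" and w: "w \<in> carrier_vec d" and z: "z \<in> carrier_vec KK"
  shows "quad (LM n KK x0 Ch Phi M a0 e0) ((s @\<^sub>v w) @\<^sub>v z) =
    s \<bullet> ((transpose_mat (colm x0) * subm M 0 0 n n * colm x0) *\<^sub>v s) - a0 * (s $ 0) * (s $ 0)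
    + s \<bullet> ((transpose_mat (colm x0) * transpose_mat (subm M n 0 d n)) *\<^sub>v w)
    + s \<bullet> ((transpose_mat (colm x0) * transpose_mat (Phi0 n Phi) * Ch) *\<^sub>v z)
    + w \<bullet> ((subm M n 0 d n * colm x0) *\<^sub>v s)
    + w \<bullet> (e0 *\<^sub>v w) + w \<bullet> (subm M n n d d *\<^sub>v w)
    + w \<bullet> ((transpose_mat (Phiw n Phi) * Ch) *\<^sub>v z)
    + z \<bullet> ((Ch * Phi0 n Phi * colm x0) *\<^sub>v s)
    + z \<bullet> ((Ch * Phiw n Phi) *\<^sub>v w)
    + z \<bullet> z"
proof -
  let ?A = "transpose_mat (colm x0) * subm M 0 0 n n * colm x0"
  have X: "colm x0 \<in> carrier_mat n 1" by (rule colm_carrier[OF x0])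
  have M1: "subm M 0 0 n n \<in> carrier_mat n n" by (simp add: subm_def)
  have XT: "transpose_mat (colm x0) \<in> carrier_mat 1 n" using X by simp
  have A: "?A \<in> carrier_mat 1 1"
    by (rule mult_carrier_mat[OF mult_carrier_mat[OF XT M1] X])
  have S: "scm a0 \<in> carrier_mat 1 1" by (simp add: scm_def)
  have M3: "subm M n n d d \<in> carrier_mat d d" by (auto simp: subm_def)
  have ta: "s \<bullet> ((?A - scm a0) *\<^sub>v s) = s \<bullet> (?A *\<^sub>v s) - a0 * (s $ 0) * (s $ 0)"
  proof -
    have "s \<bullet> ((?A - scm a0) *\<^sub>v s) = s \<bullet> (?A *\<^sub>v s - scm a0 *\<^sub>v s)"
      by (subst minus_mult_distrib_mat_vec[OF A S s], rule refl)
    also have "\<dots> = s \<bullet> (?A *\<^sub>v s) - s \<bullet> (scm a0 *\<^sub>v s)"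
      by (rule scalar_prod_minus_distrib, insert A S s, auto)
    finally show ?thesis using scm_quad[OF s] by simp
  qed
  have te: "w \<bullet> ((e0 + subm M n n d d) *\<^sub>v w) = w \<bullet> (e0 *\<^sub>v w) + w \<bullet> (subm M n n d d *\<^sub>v w)"
  proof -
    have "w \<bullet> ((e0 + subm M n n d d) *\<^sub>v w) = w \<bullet> (e0 *\<^sub>v w + subm M n n d d *\<^sub>v w)"
      by (subst add_mult_distrib_mat_vec[OF e0 M3 w], rule refl)
    also have "\<dots> = w \<bullet> (e0 *\<^sub>v w) + w \<bullet> (subm M n n d d *\<^sub>v w)"
      by (rule scalar_prod_add_distrib, insert e0 M3 w, auto)
    finally show ?thesis .
  qed
  have tz: "z \<bullet> (1\<^sub>m KK *\<^sub>v z) = z \<bullet> z" using z by simp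
  have "quad (LM n KK x0 Ch Phi M a0 e0) ((s @\<^sub>v w) @\<^sub>v z) = quad (blk3 (transpose_mat (colm x0) * subm M 0 0 n n * colm x0 - scm a0)
          (transpose_mat (colm x0) * transpose_mat (subm M n 0 d n))
          (transpose_mat (colm x0) * transpose_mat (Phi0 n Phi) * Ch)
          (subm M n 0 d n * colm x0)
          (e0 + subm M n n d d)
          (transpose_mat (Phiw n Phi) * Ch)
          (Ch * Phi0 n Phi * colm x0)
          (Ch * Phiw n Phi)
          (1\<^sub>m KK)) ((s @\<^sub>v w) @\<^sub>v z)" unfolding LM_unfold ..
  also note quad_blk3[OF LM_blocks s w z]
  finally show ?thesis using ta te tz by linarith
qed

end

lemma lmi_bar_LM:
  assumes Om: "(Om::real mat) \<in> carrier_mat (n + d) (n + d)" and Ww: "Ww \<in> carrier_mat (n + d) (n + d)"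
    and d: "d = p * T"
  shows "lmi_bar n m p T P Om Ww Ch x0 mu lam Phi =
    LM n ((n+m)*(T+1)) x0 Ch Phi (Om + mu \<cdot>\<^sub>m Ww) (\<Sum>i=1..T. lam i) (msum (p*T) (\<lambda>i. lam i \<cdot>\<^sub>m Pcal p T P i) T)"
proof -
  let ?M = "Om + mu \<cdot>\<^sub>m Ww"
  let ?S = "msum (p*T) (\<lambda>i. lam i \<cdot>\<^sub>m Pcal p T P i) T"
  have Sc: "?S \<in> carrier_mat d d" unfolding d by (rule msum_carrier, insert Pcal_carrier, auto)
  have dr: "dim_row ?M - n = d" using Om Ww by simp
  have e1: "blk1 n Om + mu \<cdot>\<^sub>m blk1 n Ww = subm ?M 0 0 n n"
    by (rule eq_matI, insert Om Ww, auto simp: blk1_def subm_def)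
  have e2: "transpose_mat (blk2 n Om) + mu \<cdot>\<^sub>m transpose_mat (blk2 n Ww) = transpose_mat (subm ?M n 0 d n)"
    by (rule eq_matI, insert Om Ww, auto simp: blk2_def subm_def)
  have e3: "blk2 n Om + mu \<cdot>\<^sub>m blk2 n Ww = subm ?M n 0 d n"
    by (rule eq_matI, insert Om Ww, auto simp: blk2_def subm_def)
  have e4: "?S + blk3' n Om + mu \<cdot>\<^sub>m blk3' n Ww = ?S + subm ?M n n d d"
    by (rule eq_matI, insert Om Ww Sc, auto simp: blk3'_def subm_def)
  show ?thesis unfolding lmi_bar_def LM_def Let_def dr e1 e2 e3 e4 ..
qed

lemma lmi_single_LM:
  assumes Om: "(Om::real mat) \<in> carrier_mat (n + d) (n + d)" and Ww: "Ww \<in> carrier_mat (n + d) (n + d)"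
    and d: "d = p * T"
  shows "lmi_single n m p T P Om Ww Ch x0 mu la Phi =
    LM n ((n+m)*(T+1)) x0 Ch Phi (Om + mu \<cdot>\<^sub>m Ww) (la * (real T / sigma_min P)) (la \<cdot>\<^sub>m 1\<^sub>m (p*T))"
proof -
  let ?M = "Om + mu \<cdot>\<^sub>m Ww"
  let ?S = "la \<cdot>\<^sub>m 1\<^sub>m (p*T)"
  have Sc: "?S \<in> carrier_mat d d" unfolding d by simp
  have dr: "dim_row ?M - n = d" using Om Ww by simp
  have e1: "blk1 n Om + mu \<cdot>\<^sub>m blk1 n Ww = subm ?M 0 0 n n"
    by (rule eq_matI, insert Om Ww, auto simp: blk1_def subm_def)
  have e2: "transpose_mat (blk2 n Om) + mu \<cdot>\<^sub>m transpose_mat (blk2 n Ww) = transpose_mat (subm ?M n 0 d n)"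
    by (rule eq_matI, insert Om Ww, auto simp: blk2_def subm_def)
  have e3: "blk2 n Om + mu \<cdot>\<^sub>m blk2 n Ww = subm ?M n 0 d n"
    by (rule eq_matI, insert Om Ww, auto simp: blk2_def subm_def)
  have e4: "?S + blk3' n Om + mu \<cdot>\<^sub>m blk3' n Ww = ?S + subm ?M n n d d"
    by (rule eq_matI, insert Om Ww Sc, auto simp: blk3'_def subm_def)
  show ?thesis unfolding lmi_single_def LM_def Let_def dr e1 e2 e3 e4 ..
qed

lemma tv_gen: assumes B: "(B::real mat) \<in> carrier_mat r c" and a: "a \<in> carrier_vec c" and z: "z \<in> carrier_vec r"
  shows "a \<bullet> (transpose_mat B *\<^sub>v z) = (B *\<^sub>v a) \<bullet> z"
proof -
  have "(transpose_mat B *\<^sub>v z) \<bullet> a = z \<bullet> (B *\<^sub>v a)" by (rule transpose_vec_mult_scalar[OF B a z])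
  then show ?thesis using B a z by (simp add: comm_scalar_prod[of _ c] comm_scalar_prod[of _ r])
qed

context
  fixes n KK d :: nat and x0 :: "real vec" and Ch Phi M e0 :: "real mat" and a0 :: real
  assumes x0: "x0 \<in> carrier_vec n"
    and Ch: "Ch \<in> carrier_mat KK KK" "transpose_mat Ch = Ch"
    and Phi: "Phi \<in> carrier_mat KK (n + d)"
    and M: "M \<in> carrier_mat (n+d) (n+d)" "transpose_mat M = M"
    and e0: "e0 \<in> carrier_mat d d"
begin

lemma LM_pwb: assumes w: "w \<in> carrier_vec d"
  defines "y \<equiv> Ch *\<^sub>v (Phi *\<^sub>v (x0 @\<^sub>v w))"
  shows "quad (LM n KK x0 Ch Phi M a0 e0) ((one1 @\<^sub>v w) @\<^sub>v (- y)) = quad M (x0 @\<^sub>v w) - a0 + w \<bullet> (e0 *\<^sub>v w) - y \<bullet> y"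
proof -
  let ?X = "colm x0"
  let ?s = "one1"
  let ?M1 = "subm M 0 0 n n" and ?M2 = "subm M n 0 d n" and ?M3 = "subm M n n d d"
  let ?P0 = "Phi0 n Phi" and ?Pw = "Phiw n Phi"
  have X: "?X \<in> carrier_mat n 1" by (rule colm_carrier[OF x0])
  have XT: "transpose_mat ?X \<in> carrier_mat 1 n" using X by simp
  have M1: "?M1 \<in> carrier_mat n n" and M2: "?M2 \<in> carrier_mat d n" and M2T: "transpose_mat ?M2 \<in> carrier_mat n d"
    and M3: "?M3 \<in> carrier_mat d d" by (auto simp: subm_def)
  have P0: "?P0 \<in> carrier_mat KK n" and Pw: "?Pw \<in> carrier_mat KK d" using Phi_parts[OF Phi] by auto
  have P0T: "transpose_mat ?P0 \<in> carrier_mat n KK" and PwT: "transpose_mat ?Pw \<in> carrier_mat d KK" using P0 Pw by auto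
  have s: "?s \<in> carrier_vec 1" by (rule one1_carrier)
  have s0: "?s $ 0 = 1" unfolding one1_def by simp
  have Xs: "?X *\<^sub>v ?s = x0" using colm_mult[OF x0 s] s0 x0 by simp
  have y0c: "Ch *\<^sub>v (?P0 *\<^sub>v x0) \<in> carrier_vec KK" and ywc: "Ch *\<^sub>v (?Pw *\<^sub>v w) \<in> carrier_vec KK"
    using Ch P0 Pw x0 w by auto
  have ysplit: "y = Ch *\<^sub>v (?P0 *\<^sub>v x0) + Ch *\<^sub>v (?Pw *\<^sub>v w)"
    unfolding y_def Phi_split[OF Phi x0 w] by (rule mult_add_distrib_mat_vec[OF Ch(1)], insert P0 Pw x0 w, auto)
  have yc: "y \<in> carrier_vec KK" unfolding ysplit using y0c ywc by simp
  define z where "z = - y"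
  have zc: "z \<in> carrier_vec KK" unfolding z_def using yc by simp
  have T1: "?s \<bullet> ((transpose_mat ?X * ?M1 * ?X) *\<^sub>v ?s) = x0 \<bullet> (?M1 *\<^sub>v x0)"
  proof -
    have "(transpose_mat ?X * ?M1 * ?X) *\<^sub>v ?s = (transpose_mat ?X * ?M1) *\<^sub>v (?X *\<^sub>v ?s)"
      by (rule assoc_mult_mat_vec, insert XT M1 X s, auto)
    also have "\<dots> = transpose_mat ?X *\<^sub>v (?M1 *\<^sub>v x0)" unfolding Xs
      by (rule assoc_mult_mat_vec, insert XT M1 x0, auto)
    finally show ?thesis using colmT_mult[OF x0 _ s, of "?M1 *\<^sub>v x0"] M1 x0 s0 by simp
  qed
  have T2: "?s \<bullet> ((transpose_mat ?X * transpose_mat ?M2) *\<^sub>v w) = x0 \<bullet> (transpose_mat ?M2 *\<^sub>v w)"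
  proof -
    have "(transpose_mat ?X * transpose_mat ?M2) *\<^sub>v w = transpose_mat ?X *\<^sub>v (transpose_mat ?M2 *\<^sub>v w)"
      by (rule assoc_mult_mat_vec, insert XT M2T w, auto)
    then show ?thesis using colmT_mult[OF x0 _ s, of "transpose_mat ?M2 *\<^sub>v w"] M2T w s0 by simp
  qed
  have T3: "?s \<bullet> ((transpose_mat ?X * transpose_mat ?P0 * Ch) *\<^sub>v z) = (Ch *\<^sub>v (?P0 *\<^sub>v x0)) \<bullet> z"
  proof -
    have "(transpose_mat ?X * transpose_mat ?P0 * Ch) *\<^sub>v z = (transpose_mat ?X * transpose_mat ?P0) *\<^sub>v (Ch *\<^sub>v z)"
      by (rule assoc_mult_mat_vec, insert XT P0T Ch zc, auto)
    also have "\<dots> = transpose_mat ?X *\<^sub>v (transpose_mat ?P0 *\<^sub>v (Ch *\<^sub>v z))"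
      by (rule assoc_mult_mat_vec, insert XT P0T Ch zc, auto)
    finally have "?s \<bullet> ((transpose_mat ?X * transpose_mat ?P0 * Ch) *\<^sub>v z) = x0 \<bullet> (transpose_mat ?P0 *\<^sub>v (Ch *\<^sub>v z))"
      using colmT_mult[OF x0 _ s, of "transpose_mat ?P0 *\<^sub>v (Ch *\<^sub>v z)"] P0T Ch zc s0 by simp
    also have "\<dots> = (?P0 *\<^sub>v x0) \<bullet> (Ch *\<^sub>v z)" by (rule tv_gen[OF P0 x0], insert Ch zc, auto)
    also have "\<dots> = z \<bullet> (Ch *\<^sub>v (?P0 *\<^sub>v x0))" by (rule sym_bil[OF Ch], insert P0 x0 zc, auto)
    also have "\<dots> = (Ch *\<^sub>v (?P0 *\<^sub>v x0)) \<bullet> z" by (rule comm_scalar_prod[OF zc y0c])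
    finally show ?thesis .
  qed
  have T4: "w \<bullet> ((?M2 * ?X) *\<^sub>v ?s) = w \<bullet> (?M2 *\<^sub>v x0)"
  proof -
    have "(?M2 * ?X) *\<^sub>v ?s = ?M2 *\<^sub>v (?X *\<^sub>v ?s)" by (rule assoc_mult_mat_vec, insert M2 X s, auto)
    then show ?thesis unfolding Xs by simp
  qed
  have T6: "w \<bullet> ((transpose_mat ?Pw * Ch) *\<^sub>v z) = (Ch *\<^sub>v (?Pw *\<^sub>v w)) \<bullet> z"
  proof -
    have "(transpose_mat ?Pw * Ch) *\<^sub>v z = transpose_mat ?Pw *\<^sub>v (Ch *\<^sub>v z)"
      by (rule assoc_mult_mat_vec, insert PwT Ch zc, auto)
    hence "w \<bullet> ((transpose_mat ?Pw * Ch) *\<^sub>v z) = w \<bullet> (transpose_mat ?Pw *\<^sub>v (Ch *\<^sub>v z))" by simp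
    also have "\<dots> = (?Pw *\<^sub>v w) \<bullet> (Ch *\<^sub>v z)" by (rule tv_gen[OF Pw w], insert Ch zc, auto)
    also have "\<dots> = z \<bullet> (Ch *\<^sub>v (?Pw *\<^sub>v w))" by (rule sym_bil[OF Ch], insert Pw w zc, auto)
    also have "\<dots> = (Ch *\<^sub>v (?Pw *\<^sub>v w)) \<bullet> z" by (rule comm_scalar_prod[OF zc ywc])
    finally show ?thesis .
  qed
  have T7: "z \<bullet> ((Ch * ?P0 * ?X) *\<^sub>v ?s) = z \<bullet> (Ch *\<^sub>v (?P0 *\<^sub>v x0))"
  proof -
    have "(Ch * ?P0 * ?X) *\<^sub>v ?s = (Ch * ?P0) *\<^sub>v (?X *\<^sub>v ?s)" by (rule assoc_mult_mat_vec, insert Ch P0 X s, auto)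
    also have "\<dots> = Ch *\<^sub>v (?P0 *\<^sub>v x0)" unfolding Xs by (rule assoc_mult_mat_vec, insert Ch P0 x0, auto)
    finally show ?thesis by simp
  qed
  have T8: "z \<bullet> ((Ch * ?Pw) *\<^sub>v w) = z \<bullet> (Ch *\<^sub>v (?Pw *\<^sub>v w))"
  proof -
    have "(Ch * ?Pw) *\<^sub>v w = Ch *\<^sub>v (?Pw *\<^sub>v w)" by (rule assoc_mult_mat_vec, insert Ch Pw w, auto)
    then show ?thesis by simp
  qed
  have QM: "quad M (x0 @\<^sub>v w) = x0 \<bullet> (?M1 *\<^sub>v x0) + x0 \<bullet> (transpose_mat ?M2 *\<^sub>v w) + w \<bullet> (?M2 *\<^sub>v x0) + w \<bullet> (?M3 *\<^sub>v w)"
    by (rule quad_split_sym[OF M x0 w])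
  have Y1: "(Ch *\<^sub>v (?P0 *\<^sub>v x0)) \<bullet> z + (Ch *\<^sub>v (?Pw *\<^sub>v w)) \<bullet> z = - (y \<bullet> y)"
  proof -
    have "(Ch *\<^sub>v (?P0 *\<^sub>v x0)) \<bullet> z + (Ch *\<^sub>v (?Pw *\<^sub>v w)) \<bullet> z = y \<bullet> z"
      unfolding ysplit by (rule add_scalar_prod_distrib[symmetric, OF y0c ywc zc])
    also have "\<dots> = - (y \<bullet> y)" unfolding z_def using yc by simp
    finally show ?thesis .
  qed
  have Y2: "z \<bullet> (Ch *\<^sub>v (?P0 *\<^sub>v x0)) + z \<bullet> (Ch *\<^sub>v (?Pw *\<^sub>v w)) = - (y \<bullet> y)"
  proof -
    have "z \<bullet> (Ch *\<^sub>v (?P0 *\<^sub>v x0)) + z \<bullet> (Ch *\<^sub>v (?Pw *\<^sub>v w)) = z \<bullet> y"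
      unfolding ysplit by (rule scalar_prod_add_distrib[symmetric, OF zc y0c ywc])
    also have "\<dots> = - (y \<bullet> y)" unfolding z_def using yc by simp
    finally show ?thesis .
  qed
  have Y3: "z \<bullet> z = y \<bullet> y" unfolding z_def using yc by simp
  have "quad (LM n KK x0 Ch Phi M a0 e0) ((?s @\<^sub>v w) @\<^sub>v z) =
    ?s \<bullet> ((transpose_mat ?X * ?M1 * ?X) *\<^sub>v ?s) - a0 * (?s $ 0) * (?s $ 0)
    + ?s \<bullet> ((transpose_mat ?X * transpose_mat ?M2) *\<^sub>v w)
    + ?s \<bullet> ((transpose_mat ?X * transpose_mat ?P0 * Ch) *\<^sub>v z)
    + w \<bullet> ((?M2 * ?X) *\<^sub>v ?s)
    + w \<bullet> (e0 *\<^sub>v w) + w \<bullet> (?M3 *\<^sub>v w)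
    + w \<bullet> ((transpose_mat ?Pw * Ch) *\<^sub>v z)
    + z \<bullet> ((Ch * ?P0 * ?X) *\<^sub>v ?s)
    + z \<bullet> ((Ch * ?Pw) *\<^sub>v w)
    + z \<bullet> z"
    by (rule LM_quad[OF x0 Ch Phi M e0 s w zc])
  also have "\<dots> = quad M (x0 @\<^sub>v w) - a0 + w \<bullet> (e0 *\<^sub>v w) - y \<bullet> y"
    unfolding T1 T2 T3 T4 T6 T7 T8 QM s0 using Y1 Y2 Y3 by linarith
  finally show ?thesis unfolding z_def .
qed

end

lemma transpose_smult_mat: "transpose_mat (a \<cdot>\<^sub>m (A::real mat)) = a \<cdot>\<^sub>m transpose_mat A"
  by (rule eq_matI, auto)

context
  fixes n m p T :: nat
    and A B E Q R :: "nat \<Rightarrow> real mat"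
    and P Ww F G Ch :: "real mat"
    and x0 :: "real vec"
  assumes pos: "n > 0" "m > 0" "p > 0" "T > 0"
    and A_dim: "\<And>k. k \<le> T \<Longrightarrow> A k \<in> carrier_mat n n"
    and B_dim: "\<And>k. k \<le> T \<Longrightarrow> B k \<in> carrier_mat n m"
    and E_dim: "\<And>k. k < T \<Longrightarrow> E k \<in> carrier_mat n p"
    and E_rank: "\<And>k. k < T \<Longrightarrow> vec_space.rank n (E k) = n"
    and Q_psd: "\<And>k. k \<le> T \<Longrightarrow> Q k \<in> carrier_mat n n \<and> psd (Q k)"
    and R_pd: "\<And>k. k \<le> T \<Longrightarrow> R k \<in> carrier_mat m m \<and> pd (R k)"
    and F_dim: "F \<in> carrier_mat (n * (T+1)) (m * (T+1))"
    and G_dim: "G \<in> carrier_mat (n * (T+1)) (n + p * T)"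
    and FG: "\<And>x u dl. is_traj n m p T A B E x u dl \<Longrightarrow> x = F *\<^sub>v u + G *\<^sub>v dl"
    and Ch: "psd Ch" "Ch * Ch = Ccal n m T Q R"
    and Ww: "Ww \<in> carrier_mat (n + p * T) (n + p * T)" "pd Ww"
    and P: "P \<in> carrier_mat p p" "pd P"
    and x0: "x0 \<in> carrier_vec n"
begin

lemma C_carrier: "Ccal n m T Q R \<in> carrier_mat ((n+m)*(T+1)) ((n+m)*(T+1))"
proof -
  have "Qcal n T Q \<in> carrier_mat ((T+1)*n) ((T+1)*n)" unfolding Qcal_def bdiag_def by simp
  moreover have "Rcal m T R \<in> carrier_mat ((T+1)*m) ((T+1)*m)" unfolding Rcal_def bdiag_def by simp
  ultimately have X: "Ccal n m T Q R \<in> carrier_mat ((T+1)*n + (T+1)*m) ((T+1)*n + (T+1)*m)"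
    unfolding Ccal_def by (intro four_block_carrier_mat, auto)
  have eq: "(T+1)*n + (T+1)*m = (n+m)*(T+1)" by (simp add: algebra_simps)
  show ?thesis using X unfolding eq .
qed

lemma Ch_props: "Ch \<in> carrier_mat ((n+m)*(T+1)) ((n+m)*(T+1))" "transpose_mat Ch = Ch"
proof -
  have c: "Ch \<in> carrier_mat (dim_row Ch) (dim_row Ch)" and t: "transpose_mat Ch = Ch" using Ch(1) unfolding psd_def by auto
  have "dim_row Ch = dim_row (Ch * Ch)" by (simp only: index_mult_mat)
  also have "\<dots> = dim_row (Ccal n m T Q R)" by (simp only: Ch(2))
  also have "\<dots> = (n+m)*(T+1)" using C_carrier by (rule carrier_matD)
  finally have eq: "dim_row Ch = (n+m)*(T+1)" .
  from c show "Ch \<in> carrier_mat ((n+m)*(T+1)) ((n+m)*(T+1))" unfolding eq .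
  show "transpose_mat Ch = Ch" by (rule t)
qed

lemma Om_props: "Ocal n m T Q R F G \<in> carrier_mat (n + p*T) (n + p*T)" "transpose_mat (Ocal n m T Q R F G) = Ocal n m T Q R F G"
  using O_carrier[OF Q_psd R_pd F_dim G_dim] O_sym[OF Q_psd R_pd F_dim G_dim] by auto

lemma Mmu_props: "Ocal n m T Q R F G + mu \<cdot>\<^sub>m Ww \<in> carrier_mat (n + p*T) (n + p*T)"
  "transpose_mat (Ocal n m T Q R F G + mu \<cdot>\<^sub>m Ww) = Ocal n m T Q R F G + mu \<cdot>\<^sub>m Ww"
proof -
  show "Ocal n m T Q R F G + mu \<cdot>\<^sub>m Ww \<in> carrier_mat (n + p*T) (n + p*T)" using Ww(1) by simp
  have Wt: "transpose_mat Ww = Ww" using Ww(2) unfolding pd_def by auto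
  have "transpose_mat (Ocal n m T Q R F G + mu \<cdot>\<^sub>m Ww) = transpose_mat (Ocal n m T Q R F G) + transpose_mat (mu \<cdot>\<^sub>m Ww)"
    by (rule transpose_add, insert Om_props(1) Ww(1), auto)
  then show "transpose_mat (Ocal n m T Q R F G + mu \<cdot>\<^sub>m Ww) = Ocal n m T Q R F G + mu \<cdot>\<^sub>m Ww"
    using Om_props(2) Wt transpose_smult_mat by simp
qed

lemma Sbar_quad: assumes w: "w \<in> carrier_vec (p*T)"
  shows "w \<bullet> (msum (p*T) (\<lambda>i. lam i \<cdot>\<^sub>m Pcal p T P i) T *\<^sub>v w) = (\<Sum>i=1..T. lam i * quad P (vec p (\<lambda>a. w $ ((i-1)*p + a))))"
proof -
  have "w \<bullet> (msum (p*T) (\<lambda>i. lam i \<cdot>\<^sub>m Pcal p T P i) T *\<^sub>v w) = (\<Sum>i=1..T. w \<bullet> ((lam i \<cdot>\<^sub>m Pcal p T P i) *\<^sub>v w))"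
    by (rule msum_quad[OF _ w], insert Pcal_carrier, auto)
  also have "\<dots> = (\<Sum>i=1..T. lam i * quad P (vec p (\<lambda>a. w $ ((i-1)*p + a))))"
  proof (rule sum.cong[OF refl])
    fix i assume i: "i \<in> {1..T}"
    have "w \<bullet> ((lam i \<cdot>\<^sub>m Pcal p T P i) *\<^sub>v w) = w \<bullet> (lam i \<cdot>\<^sub>v (Pcal p T P i *\<^sub>v w))"
      by (subst smult_mat_vec[OF Pcal_carrier w], rule refl)
    also have "\<dots> = lam i * (w \<bullet> (Pcal p T P i *\<^sub>v w))"
      by (rule scalar_prod_smult_distrib, insert Pcal_carrier[of p T P i] w, auto)
    also have "w \<bullet> (Pcal p T P i *\<^sub>v w) = quad P (vec p (\<lambda>a. w $ ((i-1)*p + a)))"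
      by (rule Pcal_quad[OF P(1) w], insert i, auto)
    finally show "w \<bullet> ((lam i \<cdot>\<^sub>m Pcal p T P i) *\<^sub>v w) = lam i * quad P (vec p (\<lambda>a. w $ ((i-1)*p + a)))" .
  qed
  finally show ?thesis .
qed

lemma part1: assumes fb: "feas_bar n m p T A B E P (Ocal n m T Q R F G) Ww Ch x0 mu lam Phi"
  shows "pwb_level p T P (Ccal n m T Q R) (Ocal n m T Q R F G) Ww x0 mu Phi"
  unfolding pwb_level_def
proof (intro allI impI)
  let ?Om = "Ocal n m T Q R F G"
  let ?M = "?Om + mu \<cdot>\<^sub>m Ww"
  let ?KK = "(n+m)*(T+1)"
  let ?S = "msum (p*T) (\<lambda>i. lam i \<cdot>\<^sub>m Pcal p T P i) T"
  fix w assume wt: "in_WT p T P w"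
  have w: "w \<in> carrier_vec (p*T)" and wb: "\<And>k. k < T \<Longrightarrow> quad P (vec p (\<lambda>i. w $ (k * p + i))) \<le> 1"
    using wt unfolding in_WT_def by auto
  have lam0: "\<And>i. i \<in> {1..T} \<Longrightarrow> lam i \<ge> 0" and ach: "achievable n m p T A B E Phi"
    and psdL: "psd (lmi_bar n m p T P ?Om Ww Ch x0 mu lam Phi)"
    using fb unfolding feas_bar_def by auto
  have Phi: "Phi \<in> carrier_mat ?KK (n + p*T)" using ach unfolding achievable_def by simp
  have Sc: "?S \<in> carrier_mat (p*T) (p*T)" by (rule msum_carrier, insert Pcal_carrier, auto)
  have L: "lmi_bar n m p T P ?Om Ww Ch x0 mu lam Phi = LM n ?KK x0 Ch Phi ?M (\<Sum>i=1..T. lam i) ?S"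
    by (rule lmi_bar_LM[OF Om_props(1) Ww(1) refl])
  define y where "y = Ch *\<^sub>v (Phi *\<^sub>v (x0 @\<^sub>v w))"
  have yc: "y \<in> carrier_vec ?KK" unfolding y_def using Ch_props Phi x0 w by auto
  have Lc: "LM n ?KK x0 Ch Phi ?M (\<Sum>i=1..T. lam i) ?S \<in> carrier_mat (1 + p*T + ?KK) (1 + p*T + ?KK)"
    by (rule LM_carrier[OF x0 Ch_props Phi Mmu_props Sc])
  have vc: "(one1 @\<^sub>v w) @\<^sub>v (- y) \<in> carrier_vec (1 + p*T + ?KK)"
    by (rule append_carrier_vec[OF append_carrier_vec[OF one1_carrier w]], insert yc, simp)
  have "0 \<le> quad (LM n ?KK x0 Ch Phi ?M (\<Sum>i=1..T. lam i) ?S) ((one1 @\<^sub>v w) @\<^sub>v (- y))"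
    using psdL vc Lc unfolding L psd_def by auto
  also have "\<dots> = quad ?M (x0 @\<^sub>v w) - (\<Sum>i=1..T. lam i) + w \<bullet> (?S *\<^sub>v w) - y \<bullet> y"
    unfolding y_def by (rule LM_pwb[OF x0 Ch_props Phi Mmu_props Sc w])
  finally have ineq: "y \<bullet> y \<le> quad ?M (x0 @\<^sub>v w) - (\<Sum>i=1..T. lam i) + w \<bullet> (?S *\<^sub>v w)" by simp
  have "w \<bullet> (?S *\<^sub>v w) = (\<Sum>i=1..T. lam i * quad P (vec p (\<lambda>a. w $ ((i-1)*p + a))))"
    by (rule Sbar_quad[OF w])
  also have "\<dots> \<le> (\<Sum>i=1..T. lam i)"
  proof (rule sum_mono)
    fix i assume i: "i \<in> {1..T}"
    have "quad P (vec p (\<lambda>a. w $ ((i-1)*p + a))) \<le> 1" using wb[of "i-1"] i by auto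
    then show "lam i * quad P (vec p (\<lambda>a. w $ ((i-1)*p + a))) \<le> lam i"
      using lam0[OF i] by (simp add: mult_left_le)
  qed
  finally have "y \<bullet> y \<le> quad ?M (x0 @\<^sub>v w)" using ineq by simp
  have Cc: "Ccal n m T Q R \<in> carrier_mat ?KK ?KK" by (rule C_carrier)
  have dl: "x0 @\<^sub>v w \<in> carrier_vec (n + p*T)" using x0 w by simp
  have PCP: "transpose_mat Phi * Ccal n m T Q R * Phi \<in> carrier_mat (n+p*T) (n+p*T)" using Phi Cc by auto
  have meq: "transpose_mat Phi * Ccal n m T Q R * Phi - ?Om - mu \<cdot>\<^sub>m Ww = transpose_mat Phi * Ccal n m T Q R * Phi - ?M"
    by (rule eq_matI, insert PCP Om_props(1) Ww(1), auto)
  have "quad (transpose_mat Phi * Ccal n m T Q R * Phi) (x0 @\<^sub>v w) = y \<bullet> y"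
  proof -
    let ?u = "Phi *\<^sub>v (x0 @\<^sub>v w)"
    have u: "?u \<in> carrier_vec ?KK" using Phi dl by auto
    have "(transpose_mat Phi * Ccal n m T Q R * Phi) *\<^sub>v (x0 @\<^sub>v w) = (transpose_mat Phi * Ccal n m T Q R) *\<^sub>v ?u"
      by (rule assoc_mult_mat_vec, insert Phi Cc dl, auto)
    also have "\<dots> = transpose_mat Phi *\<^sub>v (Ccal n m T Q R *\<^sub>v ?u)"
      by (rule assoc_mult_mat_vec, insert Phi Cc u, auto)
    also have "Ccal n m T Q R *\<^sub>v ?u = Ch *\<^sub>v (Ch *\<^sub>v ?u)"
      unfolding Ch(2)[symmetric] by (rule assoc_mult_mat_vec, insert Ch_props u, auto)
    finally have "quad (transpose_mat Phi * Ccal n m T Q R * Phi) (x0 @\<^sub>v w) = (x0 @\<^sub>v w) \<bullet> (transpose_mat Phi *\<^sub>v (Ch *\<^sub>v (Ch *\<^sub>v ?u)))"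
      unfolding quad_def by simp
    also have "\<dots> = ?u \<bullet> (Ch *\<^sub>v (Ch *\<^sub>v ?u))" by (rule tv_gen[OF Phi dl], insert Ch_props u, auto)
    also have "\<dots> = (Ch *\<^sub>v ?u) \<bullet> (Ch *\<^sub>v ?u)" by (rule sym_bil[OF Ch_props u], insert Ch_props u, auto)
    finally show ?thesis unfolding y_def .
  qed
  then have "quad (transpose_mat Phi * Ccal n m T Q R * Phi - ?Om - mu \<cdot>\<^sub>m Ww) (x0 @\<^sub>v w) = y \<bullet> y - quad ?M (x0 @\<^sub>v w)"
    unfolding meq by (subst quad_minus[OF PCP Mmu_props(1) dl], simp)
  then show "quad (transpose_mat Phi * Ccal n m T Q R * Phi - ?Om - mu \<cdot>\<^sub>m Ww) (x0 @\<^sub>v w) \<le> 0"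
    using \<open>y \<bullet> y \<le> quad ?M (x0 @\<^sub>v w)\<close> by simp
qed

lemma part3: assumes fs: "feas_single n m p T A B E P (Ocal n m T Q R F G) Ww Ch x0 mu la Phi"
  shows "feas_bar n m p T A B E P (Ocal n m T Q R F G) Ww Ch x0 mu (\<lambda>_. la / sigma_min P) Phi"
proof -
  let ?Om = "Ocal n m T Q R F G"
  let ?M = "?Om + mu \<cdot>\<^sub>m Ww"
  let ?KK = "(n+m)*(T+1)"
  let ?sg = "sigma_min P"
  let ?lam = "\<lambda>_::nat. la / ?sg"
  let ?S = "msum (p*T) (\<lambda>i. ?lam i \<cdot>\<^sub>m Pcal p T P i) T"
  let ?I = "la \<cdot>\<^sub>m 1\<^sub>m (p*T)"
  have la0: "la \<ge> 0" and ach: "achievable n m p T A B E Phi"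
    and psdL: "psd (lmi_single n m p T P ?Om Ww Ch x0 mu la Phi)"
    using fs unfolding feas_single_def by auto
  have sb: "?sg > 0" "\<And>v. v \<in> carrier_vec p \<Longrightarrow> ?sg * (v \<bullet> v) \<le> quad P v"
    using sigma_bound[OF P(1) P(2) pos(3)] by auto
  have lam0: "\<forall>i\<in>{1..T}. ?lam i \<ge> 0" using la0 sb(1) by auto
  have Phi: "Phi \<in> carrier_mat ?KK (n + p*T)" using ach unfolding achievable_def by simp
  have Sc: "?S \<in> carrier_mat (p*T) (p*T)" by (rule msum_carrier, insert Pcal_carrier, auto)
  have Ic: "?I \<in> carrier_mat (p*T) (p*T)" by simp
  have sumeq: "(\<Sum>i=1..T. ?lam i) = la * (real T / ?sg)" by simp
  have Lb: "lmi_bar n m p T P ?Om Ww Ch x0 mu ?lam Phi = LM n ?KK x0 Ch Phi ?M (la * (real T / ?sg)) ?S"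
  proof -
    have "lmi_bar n m p T P ?Om Ww Ch x0 mu ?lam Phi = LM n ?KK x0 Ch Phi ?M (\<Sum>i=1..T. ?lam i) ?S"
      by (rule lmi_bar_LM[OF Om_props(1) Ww(1) refl])
    then show ?thesis by (simp only: sumeq)
  qed
  have Ls: "lmi_single n m p T P ?Om Ww Ch x0 mu la Phi = LM n ?KK x0 Ch Phi ?M (la * (real T / ?sg)) ?I"
    by (rule lmi_single_LM[OF Om_props(1) Ww(1) refl])
  have Pt: "transpose_mat P = P" using P(2) unfolding pd_def by auto
  have Ssym: "transpose_mat ?S = ?S"
  proof (rule msum_sym)
    fix i
    show "?lam i \<cdot>\<^sub>m Pcal p T P i \<in> carrier_mat (p*T) (p*T) \<and> transpose_mat (?lam i \<cdot>\<^sub>m Pcal p T P i) = ?lam i \<cdot>\<^sub>m Pcal p T P i"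
      using Pcal_carrier[of p T P i] Pcal_sym[OF P(1) Pt, of T i] transpose_smult_mat by simp
  qed
  have Lbc: "LM n ?KK x0 Ch Phi ?M (la * (real T / ?sg)) ?S \<in> carrier_mat (1 + p*T + ?KK) (1 + p*T + ?KK)"
    by (rule LM_carrier[OF x0 Ch_props Phi Mmu_props Sc])
  have Lsc: "LM n ?KK x0 Ch Phi ?M (la * (real T / ?sg)) ?I \<in> carrier_mat (1 + p*T + ?KK) (1 + p*T + ?KK)"
    by (rule LM_carrier[OF x0 Ch_props Phi Mmu_props Ic])
  have qs: "quad (LM n ?KK x0 Ch Phi ?M (la * (real T / ?sg)) ?I) v \<ge> 0" if v: "v \<in> carrier_vec (1 + p*T + ?KK)" for v
  proof -
    have "dim_row (LM n ?KK x0 Ch Phi ?M (la * (real T / ?sg)) ?I) = 1 + p*T + ?KK" using Lsc by (rule carrier_matD)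
    then show ?thesis using psdL v unfolding Ls psd_def by auto
  qed
  have qb: "quad (LM n ?KK x0 Ch Phi ?M (la * (real T / ?sg)) ?S) v \<ge> 0" if v: "v \<in> carrier_vec (1 + p*T + ?KK)" for v
  proof -
    define u where "u = vec_first v (1 + p*T)"
    define z where "z = vec_last v ?KK"
    define s where "s = vec_first u 1"
    define w where "w = vec_last u (p*T)"
    have u: "u \<in> carrier_vec (1 + p*T)" and z: "z \<in> carrier_vec ?KK" unfolding u_def z_def by auto
    have s: "s \<in> carrier_vec 1" and w: "w \<in> carrier_vec (p*T)" unfolding s_def w_def by auto
    have vu: "v = u @\<^sub>v z" unfolding u_def z_def using v by simp
    have us: "u = s @\<^sub>v w" unfolding s_def w_def using u by simp
    have vv: "v = (s @\<^sub>v w) @\<^sub>v z" using vu us by simp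
    have qbv: "quad (LM n ?KK x0 Ch Phi ?M (la * (real T / ?sg)) ?S) v - quad (LM n ?KK x0 Ch Phi ?M (la * (real T / ?sg)) ?I) v
       = w \<bullet> (?S *\<^sub>v w) - w \<bullet> (?I *\<^sub>v w)"
      unfolding vv LM_quad[OF x0 Ch_props Phi Mmu_props Sc s w z] LM_quad[OF x0 Ch_props Phi Mmu_props Ic s w z]
      by simp
    have "w \<bullet> (?I *\<^sub>v w) = la * (w \<bullet> w)"
    proof -
      have "?I *\<^sub>v w = la \<cdot>\<^sub>v w" using smult_mat_vec[of "1\<^sub>m (p*T)" "p*T" "p*T" w la] w by simp
      then show ?thesis using w by simp
    qed
    moreover have "w \<bullet> (?S *\<^sub>v w) \<ge> la * (w \<bullet> w)"
    proof -
      have "w \<bullet> (?S *\<^sub>v w) = (\<Sum>i=1..T. ?lam i * quad P (vec p (\<lambda>a. w $ ((i-1)*p + a))))"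
        by (rule Sbar_quad[OF w])
      also have "\<dots> = (\<Sum>k<T. ?lam k * quad P (vec p (\<lambda>a. w $ (k*p + a))))"
        unfolding One_nat_def sum.atLeast1_atMost_eq by simp
      also have "\<dots> \<ge> (\<Sum>k<T. la * (vec p (\<lambda>a. w $ (k*p + a)) \<bullet> vec p (\<lambda>a. w $ (k*p + a))))"
      proof (rule sum_mono)
        fix k assume "k \<in> {..<T}"
        let ?b = "vec p (\<lambda>a. w $ (k*p + a))"
        have b: "?b \<in> carrier_vec p" by simp
        have "la * (?b \<bullet> ?b) = (la / ?sg) * (?sg * (?b \<bullet> ?b))" using sb(1) by simp
        also have "\<dots> \<le> (la / ?sg) * quad P ?b"
          by (rule mult_left_mono[OF sb(2)[OF b]], insert la0 sb(1), simp)
        finally show "la * (?b \<bullet> ?b) \<le> ?lam k * quad P ?b" .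
      qed
      also have "(\<Sum>k<T. la * (vec p (\<lambda>a. w $ (k*p + a)) \<bullet> vec p (\<lambda>a. w $ (k*p + a)))) = la * (w \<bullet> w)"
        unfolding sq_blocks[OF w] by (simp add: sum_distrib_left)
      finally show ?thesis .
    qed
    ultimately show ?thesis using qbv qs[OF v] by linarith
  qed
  have psdb: "psd (LM n ?KK x0 Ch Phi ?M (la * (real T / ?sg)) ?S)"
  proof -
    have d: "dim_row (LM n ?KK x0 Ch Phi ?M (la * (real T / ?sg)) ?S) = 1 + p*T + ?KK" using Lbc by (rule carrier_matD)
    show ?thesis unfolding psd_def d
      using Lbc LM_sym[OF x0 Ch_props Phi Mmu_props Sc Ssym] qb by simp
  qed
  show ?thesis unfolding feas_bar_def Lb using lam0 ach psdb by simp
qed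

end

theorem proposition1:
  fixes n m p T :: nat
    and A B E Q R :: "nat \<Rightarrow> real mat"
    and P Ww F G Ch :: "real mat"
    and x0 :: "real vec"
  assumes pos: "n > 0" "m > 0" "p > 0" "T > 0"
    and A_dim: "\<And>k. k \<le> T \<Longrightarrow> A k \<in> carrier_mat n n"
    and B_dim: "\<And>k. k \<le> T \<Longrightarrow> B k \<in> carrier_mat n m"
    and E_dim: "\<And>k. k < T \<Longrightarrow> E k \<in> carrier_mat n p"
    and E_rank: "\<And>k. k < T \<Longrightarrow> vec_space.rank n (E k) = n"
    and Q_psd: "\<And>k. k \<le> T \<Longrightarrow> Q k \<in> carrier_mat n n \<and> psd (Q k)"
    and R_pd: "\<And>k. k \<le> T \<Longrightarrow> R k \<in> carrier_mat m m \<and> pd (R k)"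
    and F_dim: "F \<in> carrier_mat (n * (T+1)) (m * (T+1))"
    and G_dim: "G \<in> carrier_mat (n * (T+1)) (n + p * T)"
    and FG: "\<And>x u dl. is_traj n m p T A B E x u dl \<Longrightarrow> x = F *\<^sub>v u + G *\<^sub>v dl"
    and Ch: "psd Ch" "Ch * Ch = Ccal n m T Q R"
    and Ww: "Ww \<in> carrier_mat (n + p * T) (n + p * T)" "pd Ww"
    and P: "P \<in> carrier_mat p p" "pd P"
    and x0: "x0 \<in> carrier_vec n"
  shows
    "(\<forall>mu lam Phi.
        feas_bar n m p T A B E P (Ocal n m T Q R F G) Ww Ch x0 mu lam Phi \<and>
        ereal mu = opt_bar n m p T A B E P (Ocal n m T Q R F G) Ww Ch x0 \<longrightarrow>
        pwb_level p T P (Ccal n m T Q R) (Ocal n m T Q R F G) Ww x0 mu Phi)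
     \<and> opt_pwb n m p T A B E P (Ccal n m T Q R) (Ocal n m T Q R F G) Ww x0
         \<le> opt_bar n m p T A B E P (Ocal n m T Q R F G) Ww Ch x0
     \<and> opt_bar n m p T A B E P (Ocal n m T Q R F G) Ww Ch x0
         \<le> opt_single n m p T A B E P (Ocal n m T Q R F G) Ww Ch x0"
proof -
  let ?Om = "Ocal n m T Q R F G"
  have P1: "\<And>mu lam Phi. feas_bar n m p T A B E P ?Om Ww Ch x0 mu lam Phi \<Longrightarrow>
      pwb_level p T P (Ccal n m T Q R) ?Om Ww x0 mu Phi"
    by (rule part1[OF assms])
  have P3: "\<And>mu la Phi. feas_single n m p T A B E P ?Om Ww Ch x0 mu la Phi \<Longrightarrow>
      feas_bar n m p T A B E P ?Om Ww Ch x0 mu (\<lambda>_. la / sigma_min P) Phi"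
    by (rule part3[OF assms])
  have c2: "opt_pwb n m p T A B E P (Ccal n m T Q R) ?Om Ww x0 \<le> opt_bar n m p T A B E P ?Om Ww Ch x0"
    unfolding opt_pwb_def opt_bar_def
  proof (rule Inf_superset_mono, safe)
    fix mu lam Phi assume fb: "feas_bar n m p T A B E P ?Om Ww Ch x0 mu lam Phi"
    have "feas_pwb n m p T A B E P (Ccal n m T Q R) ?Om Ww x0 mu Phi"
      unfolding feas_pwb_def using fb P1[OF fb] unfolding feas_bar_def by simp
    then show "\<exists>mu'. ereal mu = ereal mu' \<and> (\<exists>Phi. feas_pwb n m p T A B E P (Ccal n m T Q R) ?Om Ww x0 mu' Phi)"
      by blast
  qed
  have c3: "opt_bar n m p T A B E P ?Om Ww Ch x0 \<le> opt_single n m p T A B E P ?Om Ww Ch x0"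
    unfolding opt_bar_def opt_single_def
  proof (rule Inf_superset_mono, safe)
    fix mu la Phi assume fs: "feas_single n m p T A B E P ?Om Ww Ch x0 mu la Phi"
    show "\<exists>mu'. ereal mu = ereal mu' \<and> (\<exists>lam Phi. feas_bar n m p T A B E P ?Om Ww Ch x0 mu' lam Phi)"
      using P3[OF fs] by blast
  qed
  show ?thesis using P1 c2 c3 by blast
qed


end
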